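(* Let $K=1$, $P=0$, and suppose $(\alpha,\mu)$ satisfies the Data Assumption. Fix $\tau>0$ and define $\alpha^\circ\in\mathbb{D}^\uparrow_{\mathcal M}$ by $\alpha^\circ_t(A)=\alpha_t(A\cap[0,\tau])$ for all Borel $A\subset\mathbb{R}_+$ and $t\ge0$. Let $(\xi^\circ,\beta^\circ,\iota^\circ,\rho^\circ)$ and $(\xi,\beta,\iota,\rho)$ be the unique solutions of the (single-server) hard EDF fluid model equations corresponding to $(\alpha^\circ,\mu)$ and $(\alpha,\mu)$, respectively. Then for all $x,t\in[0,\tau]$: $\rho(t)=\rho^\circ(t)$, $\beta^r_t[0,x]=\beta^{\circ,r}_t[0,x]$, $\beta^s_t[0,x]=\beta^{\circ,s}_t[0,x]$, and $\xi_t[0,x]=\xi^\circ_t[0,x]$.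
   Context: $\mathcal M$ = finite Borel measures on $\mathbb{R}_+$; $\mathcal M_\sim$ atomless ones; $\mathbb{D}^\uparrow_{\mathcal M}$ = càdlàg $\mathcal M$-valued paths with $t\mapsto\int fd\zeta_t$ nondecreasing for all continuous bounded nonnegative $f$; $\mathbb{C}^\uparrow_{\mathcal M_\sim}$ its continuous $\mathcal M_\sim$-valued elements. Data Assumption (with $K=1$): (1) $\alpha_t(B)=\xi_{0-}(B)+\hat\alpha_t(B)$, $\xi_{0-}\in\mathcal M_\sim$, $\hat\alpha\in\mathbb{C}^\uparrow_{\mathcal M_\sim}$ with $\hat\alpha_t(B)=\int_0^ta_s(B)ds$, each $a_t$ a finite measure on $[t,\infty)$, $t\mapsto a_t(B)$ measurable, $\lim_{\delta\downarrow0}\sup_{s\in[0,t]}a_s[s,s+\delta]=0$ for all $t$. (2) $\mu(t)=\int_0^tm(s)ds$ with $m\ge0$ Borel and $\inf_{s\in[0,t]}m(s)>0$ for every $t$. Single-server hard EDF fluid model equations for data $(\alpha,\mu)$ (unknowns $\xi\in\mathbb{D}_{\mathcal M}$; $\beta,\beta^s,\beta^r\in\mathbb{D}^\uparrow_{\mathcal M}$; $\rho,\iota$ nonnegative nondecreasing càdlàg): for all $t,x\ge0$: $\beta=\beta^s+\beta^r$; $\iota(t)=\mu(t)-\beta^s_t[0,\infty)$; $\beta^r_t(t,\infty)=0$; $\xi_t[0,x]=\alpha_t[0,x]-\beta_t[0,x]$; $\int\xi_t[0,x]d\iota(t)=0$; $\int\xi_t[0,x]d\beta_t(x,\infty)=0$;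 $\rho(t)=\beta^r_t[0,t]=\beta^r_t[0,\infty)$; $\xi_t[0,t)=0$; $\int1\{\sigma(t)>t\}d\rho(t)=0$ where $\sigma(t)=\inf\operatorname{supp}\xi_t$. *)

theory Defs
  imports "HOL-Analysis.Analysis"
begin

section \<open>Finite Borel measures on R+ (represented as Borel measures on real vanishing on negatives)\<close>

definition fin_meas :: "real measure \<Rightarrow> bool" where
  "fin_meas M \<longleftrightarrow> sets M = sets borel \<and> emeasure M UNIV < \<infinity> \<and> emeasure M {..<0} = 0"

definition atomless_meas :: "real measure \<Rightarrow> bool" where
  "atomless_meas M \<longleftrightarrow> fin_meas M \<and> (\<forall>x. emeasure M {x} = 0)"

definition bcont :: "(real \<Rightarrow> real) \<Rightarrow> bool" where
  "bcont f \<longleftrightarrow> continuous_on UNIV f \<and> bounded (range f)"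

definition weak_tendsto :: "(real \<Rightarrow> real measure) \<Rightarrow> real measure \<Rightarrow> real filter \<Rightarrow> bool" where
  "weak_tendsto \<zeta> \<nu> F \<longleftrightarrow>
     (\<forall>f. bcont f \<longrightarrow> ((\<lambda>t. integral\<^sup>L (\<zeta> t) f) \<longlongrightarrow> integral\<^sup>L \<nu> f) F)"

definition cadlag_M :: "(real \<Rightarrow> real measure) \<Rightarrow> bool" where
  "cadlag_M \<zeta> \<longleftrightarrow> (\<forall>t\<ge>0. fin_meas (\<zeta> t))
     \<and> (\<forall>t\<ge>0. weak_tendsto \<zeta> (\<zeta> t) (at_right t))
     \<and> (\<forall>t>0. \<exists>\<nu>. fin_meas \<nu> \<and> weak_tendsto \<zeta> \<nu> (at_left t))"

definition cadlag_M_up :: "(real \<Rightarrow> real measure) \<Rightarrow> bool" where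
  "cadlag_M_up \<zeta> \<longleftrightarrow> cadlag_M \<zeta> \<and>
     (\<forall>f. bcont f \<and> (\<forall>x. f x \<ge> 0) \<longrightarrow> mono_on {0..} (\<lambda>t. integral\<^sup>L (\<zeta> t) f))"

definition cont_M_atomless_up :: "(real \<Rightarrow> real measure) \<Rightarrow> bool" where
  "cont_M_atomless_up \<zeta> \<longleftrightarrow> cadlag_M_up \<zeta> \<and> (\<forall>t\<ge>0. atomless_meas (\<zeta> t))
     \<and> (\<forall>t\<ge>0. weak_tendsto \<zeta> (\<zeta> t) (at t within {0..}))"

definition cadlag_fun :: "(real \<Rightarrow> real) \<Rightarrow> bool" where
  "cadlag_fun f \<longleftrightarrow> (\<forall>t\<ge>0. continuous (at_right t) f) \<and> (\<forall>t>0. \<exists>l. (f \<longlongrightarrow> l) (at_left t))"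

definition nonneg_nondec_cadlag :: "(real \<Rightarrow> real) \<Rightarrow> bool" where
  "nonneg_nondec_cadlag f \<longleftrightarrow> cadlag_fun f \<and> mono_on {0..} f \<and> (\<forall>t\<ge>0. f t \<ge> 0)"

text \<open>Lebesgue--Stieltjes measure df on [0,infinity) of a nondecreasing right-continuous f,
  with the convention f(0-) = 0 (so df has an atom f(0) at 0).\<close>
definition stieltjes :: "(real \<Rightarrow> real) \<Rightarrow> real measure" where
  "stieltjes f = interval_measure (\<lambda>t. if t < 0 then 0 else f t)"

text \<open>Support of a measure and sigma(t) = inf supp (inf of empty set = infinity)\<close>
definition supp_meas :: "real measure \<Rightarrow> real set" where
  "supp_meas M = {x. \<forall>e>0. emeasure M {x - e<..<x + e} \<noteq> 0}"

definition inf_supp :: "real measure \<Rightarrow> ereal" where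
  "inf_supp M = Inf (ereal ` supp_meas M)"

definition data_assumption :: "(real \<Rightarrow> real measure) \<Rightarrow> (real \<Rightarrow> real) \<Rightarrow> bool" where
  "data_assumption \<alpha> \<mu> \<longleftrightarrow>
    (\<exists>\<xi>0 \<alpha>h a.
       atomless_meas \<xi>0 \<and> cont_M_atomless_up \<alpha>h
     \<and> (\<forall>t\<ge>0. sets (\<alpha> t) = sets borel)
     \<and> (\<forall>t\<ge>0. \<forall>B\<in>sets borel. emeasure (\<alpha> t) B = emeasure \<xi>0 B + emeasure (\<alpha>h t) B)
     \<and> (\<forall>t\<ge>0. \<forall>B\<in>sets borel. emeasure (\<alpha>h t) B = (\<integral>\<^sup>+ s\<in>{0..t}. emeasure (a s) B \<partial>lborel))
     \<and> (\<forall>t\<ge>0. fin_meas (a t) \<and> emeasure (a t) {..<t} = 0)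
     \<and> (\<forall>B\<in>sets borel. (\<lambda>s. emeasure (a s) B) \<in> borel_measurable (restrict_space borel {0..}))
     \<and> (\<forall>t\<ge>0. ((\<lambda>\<delta>. SUP s\<in>{0..t}. emeasure (a s) {s..s+\<delta>}) \<longlongrightarrow> 0) (at_right 0)))
  \<and> (\<exists>m::real \<Rightarrow> real. m \<in> borel_measurable borel \<and> (\<forall>s\<ge>0. m s \<ge> 0)
     \<and> (\<forall>t\<ge>0. \<exists>c>0. \<forall>s\<in>{0..t}. m s \<ge> c)
     \<and> (\<forall>t\<ge>0. ennreal (\<mu> t) = (\<integral>\<^sup>+ s\<in>{0..t}. ennreal (m s) \<partial>lborel)))"

definition hard_EDF_FME ::
  "(real \<Rightarrow> real measure) \<Rightarrow> (real \<Rightarrow> real) \<Rightarrow>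
   (real \<Rightarrow> real measure) \<Rightarrow> (real \<Rightarrow> real measure) \<Rightarrow> (real \<Rightarrow> real measure) \<Rightarrow>
   (real \<Rightarrow> real measure) \<Rightarrow> (real \<Rightarrow> real) \<Rightarrow> (real \<Rightarrow> real) \<Rightarrow> bool" where
  "hard_EDF_FME \<alpha> \<mu> \<xi> \<beta> \<beta>s \<beta>r \<rho> \<iota> \<longleftrightarrow>
     cadlag_M \<xi> \<and> cadlag_M_up \<beta> \<and> cadlag_M_up \<beta>s \<and> cadlag_M_up \<beta>r
   \<and> nonneg_nondec_cadlag \<rho> \<and> nonneg_nondec_cadlag \<iota>
   \<and> (\<forall>t\<ge>0. \<forall>B\<in>sets borel. emeasure (\<beta> t) B = emeasure (\<beta>s t) B + emeasure (\<beta>r t) B)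
   \<and> (\<forall>t\<ge>0. \<iota> t = \<mu> t - measure (\<beta>s t) {0..})
   \<and> (\<forall>t\<ge>0. emeasure (\<beta>r t) {t<..} = 0)
   \<and> (\<forall>t\<ge>0. \<forall>x\<ge>0. measure (\<xi> t) {0..x} = measure (\<alpha> t) {0..x} - measure (\<beta> t) {0..x})
   \<and> (\<forall>x\<ge>0. (\<integral>\<^sup>+ t\<in>{0..}. ennreal (measure (\<xi> t) {0..x}) \<partial>stieltjes \<iota>) = 0)
   \<and> (\<forall>x\<ge>0. (\<integral>\<^sup>+ t\<in>{0..}. ennreal (measure (\<xi> t) {0..x})
                 \<partial>stieltjes (\<lambda>s. measure (\<beta> s) {x<..})) = 0)
   \<and> (\<forall>t\<ge>0. \<rho> t = measure (\<beta>r t) {0..t} \<and> \<rho> t = measure (\<beta>r t) {0..})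
   \<and> (\<forall>t\<ge>0. emeasure (\<xi> t) {0..<t} = 0)
   \<and> (\<integral>\<^sup>+ t\<in>{0..}. (if inf_supp (\<xi> t) > ereal t then 1 else 0) \<partial>stieltjes \<rho>) = 0"

definition unique_hard_EDF_solution ::
  "(real \<Rightarrow> real measure) \<Rightarrow> (real \<Rightarrow> real) \<Rightarrow>
   (real \<Rightarrow> real measure) \<Rightarrow> (real \<Rightarrow> real measure) \<Rightarrow> (real \<Rightarrow> real measure) \<Rightarrow>
   (real \<Rightarrow> real measure) \<Rightarrow> (real \<Rightarrow> real) \<Rightarrow> (real \<Rightarrow> real) \<Rightarrow> bool" where
  "unique_hard_EDF_solution \<alpha> \<mu> \<xi> \<beta> \<beta>s \<beta>r \<rho> \<iota> \<longleftrightarrow>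
     hard_EDF_FME \<alpha> \<mu> \<xi> \<beta> \<beta>s \<beta>r \<rho> \<iota>
   \<and> (\<forall>\<xi>' \<beta>' \<beta>s' \<beta>r' \<rho>' \<iota>'. hard_EDF_FME \<alpha> \<mu> \<xi>' \<beta>' \<beta>s' \<beta>r' \<rho>' \<iota>' \<longrightarrow>
        (\<forall>t\<ge>0. \<xi>' t = \<xi> t \<and> \<beta>' t = \<beta> t \<and> \<beta>s' t = \<beta>s t \<and> \<beta>r' t = \<beta>r t
               \<and> \<rho>' t = \<rho> t \<and> \<iota>' t = \<iota> t))"

definition truncate_data :: "(real \<Rightarrow> real measure) \<Rightarrow> real \<Rightarrow> (real \<Rightarrow> real measure)" where
  "truncate_data \<alpha> \<tau> = (\<lambda>t. density (\<alpha> t) (indicator {0..\<tau>}))"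

end

theory Submission
  imports Defs
begin


definition ext0 :: "(real \<Rightarrow> real) \<Rightarrow> real \<Rightarrow> real" where
  "ext0 f = (\<lambda>t. if t < 0 then 0 else f t)"

lemma stieltjes_ext0: "stieltjes f = interval_measure (ext0 f)"
  by (simp add: stieltjes_def ext0_def)

lemma Ioc_Int_stable: "Int_stable (range (\<lambda>(a, b). {a<..b::real}))"
proof (rule Int_stableI)
  fix A B assume "A \<in> range (\<lambda>(a, b). {a<..b::real})" "B \<in> range (\<lambda>(a, b). {a<..b::real})"
  then obtain a b c d where "A = {a<..b}" "B = {c<..d}" by auto
  then have "A \<inter> B = {max a c<..min b d}" by auto
  then show "A \<inter> B \<in> range (\<lambda>(a, b). {a<..b::real})" by (auto intro!: image_eqI[where x="(max a c, min b d)"])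
qed

lemma sets_borel_Ioc: "sets borel = sigma_sets UNIV (range (\<lambda>(a, b). {a<..b::real}))"
  by (subst borel_sigma_sets_Ioc) (simp add: sets_measure_of)

lemma Ioc_cover: "(\<Union>i::nat. {- real i<..real i}) = UNIV"
proof -
  { fix x :: real
    obtain n :: nat where "\<bar>x\<bar> < real n" using reals_Archimedean2 by blast
    then have "x \<in> {- real n<..real n}" by auto
    then have "x \<in> (\<Union>i::nat. {- real i<..real i})" by blast }
  then show ?thesis by auto
qed

lemma interval_measure_agree:
  fixes F G :: "real \<Rightarrow> real"
  assumes mF: "\<And>x y. x \<le> y \<Longrightarrow> F x \<le> F y" and rF: "\<And>a. continuous (at_right a) F"
    and mG: "\<And>x y. x \<le> y \<Longrightarrow> G x \<le> G y" and rG: "\<And>a. continuous (at_right a) G"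
    and eq: "\<And>x. x \<le> c \<Longrightarrow> F x = G x"
    and A: "A \<in> sets borel" "A \<subseteq> {..c}"
  shows "emeasure (interval_measure F) A = emeasure (interval_measure G) A"
proof -
  let ?E = "range (\<lambda>(a, b). {a<..b::real})"
  have D: "density (interval_measure F) (indicator {..c}) = density (interval_measure G) (indicator {..c})"
  proof (rule measure_eqI_generator_eq[where E="?E" and \<Omega>=UNIV and A="\<lambda>i. {- real i<..real i}"])
    show "Int_stable ?E" by (rule Ioc_Int_stable)
    show "?E \<subseteq> Pow UNIV" by auto
    have em: "emeasure (density (interval_measure H) (indicator {..c})) {a<..b} =
       (if a \<le> min b c then ennreal (H (min b c) - H a) else 0)"
      if "\<And>x y. x \<le> y \<Longrightarrow> H x \<le> H y" "\<And>a. continuous (at_right a) H" for H a b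
    proof -
      have "emeasure (density (interval_measure H) (indicator {..c})) {a<..b} =
            emeasure (interval_measure H) ({..c} \<inter> {a<..b})"
        by (rule emeasure_restricted) auto
      also have "{..c} \<inter> {a<..b} = {a<..min b c}" by auto
      finally show ?thesis using emeasure_interval_measure_Ioc_eq[of H a "min b c", OF that] by simp
    qed
    show "emeasure (density (interval_measure F) (indicator {..c})) X =
          emeasure (density (interval_measure G) (indicator {..c})) X" if "X \<in> ?E" for X
    proof -
      obtain a b where X: "X = {a<..b}" using \<open>X \<in> ?E\<close> by auto
      have e1: "emeasure (density (interval_measure F) (indicator {..c})) {a<..b} =
       (if a \<le> min b c then ennreal (F (min b c) - F a) else 0)" by (rule em[OF mF rF])
      have e2: "emeasure (density (interval_measure G) (indicator {..c})) {a<..b} =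
       (if a \<le> min b c then ennreal (G (min b c) - G a) else 0)" by (rule em[OF mG rG])
      show ?thesis unfolding X e1 e2
        using eq[of a] eq[of "min b c"] by auto
    qed
    show "sets (density (interval_measure F) (indicator {..c})) = sigma_sets UNIV ?E"
      using sets_borel_Ioc by simp
    show "sets (density (interval_measure G) (indicator {..c})) = sigma_sets UNIV ?E"
      using sets_borel_Ioc by simp
    show "range (\<lambda>i. {- real i<..real i}) \<subseteq> ?E" by auto
    show "(\<Union>i. {- real i<..real i}) = UNIV" by (rule Ioc_cover)
    show "emeasure (density (interval_measure F) (indicator {..c})) {- real i<..real i} \<noteq> \<infinity>" for i
      using em[OF mF rF, of "- real i" "real i"] by auto
  qed
  have "emeasure (interval_measure F) A = emeasure (density (interval_measure F) (indicator {..c})) A"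
    using A by (subst emeasure_restricted) (auto simp: Int_absorb1)
  also have "\<dots> = emeasure (interval_measure G) A"
    unfolding D using A by (subst emeasure_restricted) (auto simp: Int_absorb1)
  finally show ?thesis .
qed

lemma interval_measure_add:
  fixes F G :: "real \<Rightarrow> real"
  assumes mF: "\<And>x y. x \<le> y \<Longrightarrow> F x \<le> F y" and rF: "\<And>a. continuous (at_right a) F"
    and mG: "\<And>x y. x \<le> y \<Longrightarrow> G x \<le> G y" and rG: "\<And>a. continuous (at_right a) G"
    and A: "A \<in> sets borel"
  shows "emeasure (interval_measure (\<lambda>x. F x + G x)) A
       = emeasure (interval_measure F) A + emeasure (interval_measure G) A"
proof -
  let ?E = "range (\<lambda>(a, b). {a<..b::real})"
  let ?mu = "\<lambda>A. emeasure (interval_measure F) A + emeasure (interval_measure G) A"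
  define N where "N = measure_of UNIV (sets borel) ?mu"
  have sa: "sigma_algebra UNIV (sets borel)"
    using sets.sigma_algebra_axioms[of borel] by simp
  have pos: "positive (sets borel) ?mu" by (simp add: positive_def)
  have ca: "countably_additive (sets borel) ?mu"
  proof (rule countably_additiveI)
    fix A :: "nat \<Rightarrow> real set" assume "range A \<subseteq> sets borel" "disjoint_family A"
    then have "(\<Sum>i. emeasure (interval_measure F) (A i)) = emeasure (interval_measure F) (\<Union>i. A i)"
      "(\<Sum>i. emeasure (interval_measure G) (A i)) = emeasure (interval_measure G) (\<Union>i. A i)"
      by (auto intro!: suminf_emeasure)
    then show "(\<Sum>i. ?mu (A i)) = ?mu (\<Union>i. A i)"
      by (subst suminf_add[symmetric]) auto
  qed
  have eN: "emeasure N B = ?mu B" if "B \<in> sets borel" for B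
    unfolding N_def by (rule emeasure_measure_of_sigma[OF sa pos ca that])
  have sN: "sets N = sets borel"
    unfolding N_def by (subst sets_measure_of) (auto simp: sigma_algebra.sigma_sets_eq[OF sa])
  have mFG: "\<And>x y. x \<le> y \<Longrightarrow> F x + G x \<le> F y + G y" using mF mG by (simp add: add_mono)
  have rFG: "\<And>a. continuous (at_right a) (\<lambda>x. F x + G x)" using rF rG by (intro continuous_add)
  have "interval_measure (\<lambda>x. F x + G x) = N"
  proof (rule measure_eqI_generator_eq[where E="?E" and \<Omega>=UNIV and A="\<lambda>i. {- real i<..real i}"])
    show "Int_stable ?E" by (rule Ioc_Int_stable)
    show "?E \<subseteq> Pow UNIV" by auto
    show "emeasure (interval_measure (\<lambda>x. F x + G x)) X = emeasure N X" if "X \<in> ?E" for X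
    proof -
      obtain a b where X: "X = {a<..b}" using \<open>X \<in> ?E\<close> by auto
      show ?thesis unfolding X eN[of "{a<..b}", simplified]
        using emeasure_interval_measure_Ioc_eq[of F a b, OF mF rF]
          emeasure_interval_measure_Ioc_eq[of G a b, OF mG rG]
          emeasure_interval_measure_Ioc_eq[of "\<lambda>x. F x + G x" a b, OF mFG rFG]
          mF[of a b] mG[of a b]
        by (auto simp: ennreal_plus[symmetric] simp del: ennreal_plus)
    qed
    show "sets (interval_measure (\<lambda>x. F x + G x)) = sigma_sets UNIV ?E" using sets_borel_Ioc by simp
    show "sets N = sigma_sets UNIV ?E" using sets_borel_Ioc sN by simp
    show "range (\<lambda>i. {- real i<..real i}) \<subseteq> ?E" by auto
    show "(\<Union>i. {- real i<..real i}) = UNIV" by (rule Ioc_cover)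
    show "emeasure (interval_measure (\<lambda>x. F x + G x)) {- real i<..real i} \<noteq> \<infinity>" for i
      using emeasure_interval_measure_Ioc_eq[of "\<lambda>x. F x + G x", OF mFG rFG] by auto
  qed
  then show ?thesis using eN[OF A] by simp
qed

lemma interval_measure_const:
  assumes "A \<in> sets borel"
  shows "emeasure (interval_measure (\<lambda>x. c)) A = 0"
proof -
  have "emeasure (interval_measure (\<lambda>x. c)) UNIV \<le> (\<Sum>i. emeasure (interval_measure (\<lambda>x. c)) {- real i<..real i})"
    using emeasure_subadditive_countably[of "\<lambda>i. {- real i<..real i}" "interval_measure (\<lambda>x. c)"]
    by (simp add: Ioc_cover image_subset_iff)
  also have "\<dots> = 0"
    using emeasure_interval_measure_Ioc_eq[of "\<lambda>x. c"] by simp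
  finally have "emeasure (interval_measure (\<lambda>x. c)) UNIV = 0" by simp
  then show ?thesis using emeasure_mono[of A UNIV "interval_measure (\<lambda>x. c)"] assms by simp
qed

lemma ext0_mono:
  assumes "mono_on {0..} f" "f 0 \<ge> 0"
  shows "\<And>x y. x \<le> y \<Longrightarrow> ext0 f x \<le> ext0 f y"
proof -
  fix x y :: real assume "x \<le> y"
  show "ext0 f x \<le> ext0 f y"
  proof (cases "x < 0")
    case True
    then show ?thesis
      using assms mono_onD[OF assms(1), of 0 y] by (auto simp: ext0_def)
  next
    case False
    then show ?thesis using \<open>x \<le> y\<close> mono_onD[OF assms(1), of x y] by (auto simp: ext0_def)
  qed
qed

lemma ext0_rc:
  assumes "\<And>t. t \<ge> 0 \<Longrightarrow> continuous (at_right t) f"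
  shows "continuous (at_right a) (ext0 f)"
proof (cases "a < 0")
  case True
  have ev: "\<forall>\<^sub>F x in at_right a. ext0 f x = 0"
    using eventually_at_right_real[of a 0] True by (auto elim!: eventually_mono simp: ext0_def)
  have "(ext0 f \<longlongrightarrow> 0) (at_right a)"
    by (rule tendsto_eventually) (use ev in auto)
  then show ?thesis using True by (simp add: continuous_within ext0_def)
next
  case False
  have ev: "\<forall>\<^sub>F x in at_right a. f x = ext0 f x"
    using False by (auto simp: ext0_def eventually_at_right_less[unfolded eventually_at_filter] eventually_at_filter intro!: eventually_mono[OF eventually_at_right_less[of a]])
  have "(f \<longlongrightarrow> f a) (at_right a)" using assms[of a] False by (simp add: continuous_within)
  then have "(ext0 f \<longlongrightarrow> f a) (at_right a)" using ev by (rule Lim_transform_eventually)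
  then show ?thesis using False by (simp add: continuous_within ext0_def)
qed


lemma fin_meas_sets: "fin_meas M \<Longrightarrow> sets M = sets borel"
  by (simp add: fin_meas_def)
lemma fin_meas_space: "fin_meas M \<Longrightarrow> space M = UNIV"
  using sets_eq_imp_space_eq[of M borel] by (simp add: fin_meas_def)
lemma fin_meas_finite: "fin_meas M \<Longrightarrow> finite_measure M"
  by (rule finite_measureI) (simp add: fin_meas_space fin_meas_def less_top)
lemma fin_meas_neg: "fin_meas M \<Longrightarrow> emeasure M {..<0} = 0"
  by (simp add: fin_meas_def)
lemma fin_meas_emeasure_finite: "fin_meas M \<Longrightarrow> emeasure M A \<noteq> \<infinity>"
  using finite_measure.emeasure_finite[OF fin_meas_finite] by auto
lemma fin_meas_emeasure: "fin_meas M \<Longrightarrow> emeasure M A = ennreal (measure M A)"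
  using finite_measure.emeasure_eq_measure[OF fin_meas_finite] by auto
lemma fin_meas_sets_in: "fin_meas M \<Longrightarrow> A \<in> sets borel \<Longrightarrow> A \<in> sets M"
  by (simp add: fin_meas_sets)


lemma fin_meas_integrable:
  assumes "fin_meas M" "f \<in> borel_measurable borel" "\<And>x. \<bar>f x\<bar> \<le> B"
  shows "integrable M (f :: real \<Rightarrow> real)"
proof -
  have "f \<in> borel_measurable M" using assms(1,2) measurable_cong_sets[of M borel] fin_meas_sets by metis
  moreover have "AE x in M. norm (f x) \<le> B" using assms(3) by simp
  ultimately show ?thesis
    using finite_measure.integrable_const_bound[OF fin_meas_finite[OF assms(1)]] by blast
qed

lemma bcontE:
  assumes "bcont f" obtains B where "B > 0" "\<And>x. \<bar>f x\<bar> \<le> B"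
  using assms unfolding bcont_def bounded_pos by auto

lemma bcont_cont: "bcont f \<Longrightarrow> continuous_on UNIV f"
  by (simp add: bcont_def)

lemma bcont_meas: "bcont f \<Longrightarrow> f \<in> borel_measurable borel"
  by (simp add: bcont_def borel_measurable_continuous_onI)

lemma bcontI:
  assumes "continuous_on UNIV f" "\<And>x. \<bar>f x\<bar> \<le> B"
  shows "bcont f"
  unfolding bcont_def bounded_iff using assms by auto

definition cut :: "real \<Rightarrow> real \<Rightarrow> real \<Rightarrow> real" where
  "cut c d y = max 0 (min 1 ((c + d - y) / d))"

lemma cut_cont: "d > 0 \<Longrightarrow> continuous_on UNIV (cut c d)"
  unfolding cut_def by (intro continuous_intros) auto

lemma cut_ge0: "0 \<le> cut c d y" by (simp add: cut_def)
lemma cut_le1: "cut c d y \<le> 1" by (simp add: cut_def)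
lemma cut_one: "d > 0 \<Longrightarrow> y \<le> c \<Longrightarrow> cut c d y = 1"
  by (simp add: cut_def)
lemma cut_zero: "d > 0 \<Longrightarrow> c + d \<le> y \<Longrightarrow> cut c d y = 0"
proof -
  assume "d > 0" "c + d \<le> y"
  then have "(c + d - y) / d \<le> 0" by (intro divide_nonpos_pos) auto
  then show ?thesis unfolding cut_def by simp
qed
lemma cut_bcont: "d > 0 \<Longrightarrow> bcont (cut c d)"
proof (rule bcontI[where B=1])
  assume "d > 0"
  then show "continuous_on UNIV (cut c d)" by (rule cut_cont)
  show "\<bar>cut c d x\<bar> \<le> 1" for x using cut_ge0[of c d x] cut_le1[of c d x] by linarith
qed

lemma bcont_mult: "bcont f \<Longrightarrow> bcont g \<Longrightarrow> bcont (\<lambda>x. f x * g x)"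
proof -
  assume f: "bcont f" and g: "bcont g"
  obtain A where A: "\<And>x. \<bar>f x\<bar> \<le> A" using bcontE[OF f] by blast
  obtain B where B: "\<And>x. \<bar>g x\<bar> \<le> B" using bcontE[OF g] by blast
  show ?thesis
  proof (rule bcontI[where B="A*B"])
    show "continuous_on UNIV (\<lambda>x. f x * g x)" using f g unfolding bcont_def by (intro continuous_on_mult) auto
    show "\<bar>f x * g x\<bar> \<le> A * B" for x
      unfolding abs_mult by (rule mult_mono) (use A[of x] B[of x] in auto)
  qed
qed

lemma bcont_diff: "bcont f \<Longrightarrow> bcont g \<Longrightarrow> bcont (\<lambda>x. f x - g x)"
proof -
  assume f: "bcont f" and g: "bcont g"
  obtain A where A: "\<And>x. \<bar>f x\<bar> \<le> A" using bcontE[OF f] by blast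
  obtain B where B: "\<And>x. \<bar>g x\<bar> \<le> B" using bcontE[OF g] by blast
  show ?thesis
  proof (rule bcontI[where B="A+B"])
    show "continuous_on UNIV (\<lambda>x. f x - g x)" using f g unfolding bcont_def by (intro continuous_on_diff) auto
    show "\<bar>f x - g x\<bar> \<le> A + B" for x using A[of x] B[of x] by linarith
  qed
qed

lemma bcont_const: "bcont (\<lambda>x. c)"
  by (rule bcontI[where B="\<bar>c\<bar>"]) auto

lemma bcont_shift: "bcont f \<Longrightarrow> bcont (\<lambda>x. f (x + a))"
proof -
  assume f: "bcont f"
  obtain A where A: "\<And>x. \<bar>f x\<bar> \<le> A" using bcontE[OF f] by blast
  show ?thesis
  proof (rule bcontI[where B=A])
    have "continuous_on UNIV (f \<circ> (\<lambda>x. x + a))"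
      by (rule continuous_on_compose) (use f in \<open>auto simp: bcont_def intro!: continuous_intros\<close>)
    then show "continuous_on UNIV (\<lambda>x. f (x + a))" by (simp add: o_def)
    show "\<bar>f (x + a)\<bar> \<le> A" for x by (rule A)
  qed
qed

lemma cut_lim: "(\<lambda>n. cut c (1 / Suc n) y) \<longlonglongrightarrow> indicator {..c} y"
proof (cases "y \<le> c")
  case True
  then show ?thesis by (simp add: cut_one)
next
  case False
  then have "y - c > 0" by simp
  then obtain N :: nat where N0: "inverse (real (Suc N)) < y - c"
    using reals_Archimedean by blast
  then have N: "1 / real (Suc N) < y - c" by (simp add: divide_inverse)
  have "\<forall>n\<ge>N. cut c (1 / Suc n) y = 0"
  proof (intro allI impI)
    fix n assume "n \<ge> N"
    then have "1 / real (Suc n) \<le> 1 / Suc N" by (intro divide_left_mono) auto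
    then show "cut c (1 / Suc n) y = 0" using N by (intro cut_zero) auto
  qed
  then have "(\<lambda>n. cut c (1 / Suc n) y) \<longlonglongrightarrow> 0"
    by (intro tendsto_eventually) (auto simp: eventually_sequentially)
  then show ?thesis using False by simp
qed
lemma fin_meas_meas: "fin_meas M \<Longrightarrow> f \<in> borel_measurable borel \<Longrightarrow> f \<in> borel_measurable M"
  using measurable_cong_sets[of M borel] fin_meas_sets by metis

lemma fin_meas_dom_conv:
  fixes s :: "nat \<Rightarrow> real \<Rightarrow> real"
  assumes M: "fin_meas M" and sm: "\<And>n. s n \<in> borel_measurable borel" and hm: "h \<in> borel_measurable borel"
    and B: "\<And>n x. \<bar>s n x\<bar> \<le> B" and lim: "\<And>x. (\<lambda>n. s n x) \<longlonglongrightarrow> h x"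
  shows "(\<lambda>n. \<integral>x. s n x \<partial>M) \<longlonglongrightarrow> (\<integral>x. h x \<partial>M)"
proof (rule integral_dominated_convergence[where w="\<lambda>_. B"])
  show "h \<in> borel_measurable M" using fin_meas_meas[OF M hm] .
  show "s i \<in> borel_measurable M" for i using fin_meas_meas[OF M sm] .
  show "integrable M (\<lambda>_. B)" using fin_meas_integrable[OF M, of "\<lambda>_. B" "\<bar>B\<bar>"] by simp
  show "AE x in M. (\<lambda>i. s i x) \<longlonglongrightarrow> h x" using lim by simp
  show "AE x in M. norm (s i x) \<le> B" for i using B by simp
qed

lemma up_mono_cut:
  assumes up: "cadlag_M_up \<zeta>" and st: "0 \<le> s" "s \<le> t" and f: "bcont f" "\<And>x. f x \<ge> 0"
  shows "(\<integral>x. indicator {..c} x * f x \<partial>\<zeta> s) \<le> (\<integral>x. indicator {..c} x * f x \<partial>\<zeta> t)"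
    and "(\<integral>x. indicator {c<..} x * f x \<partial>\<zeta> s) \<le> (\<integral>x. indicator {c<..} x * f x \<partial>\<zeta> t)"
proof -
  have fs: "fin_meas (\<zeta> s)" and ft: "fin_meas (\<zeta> t)"
    using up st unfolding cadlag_M_up_def cadlag_M_def by auto
  have mono: "mono_on {0..} (\<lambda>t. integral\<^sup>L (\<zeta> t) g)" if "bcont g" "\<And>x. g x \<ge> 0" for g
    using up that unfolding cadlag_M_up_def by auto
  obtain B where B: "\<And>x. \<bar>f x\<bar> \<le> B" using bcontE[OF f(1)] by blast
  have fm: "f \<in> borel_measurable borel" using bcont_meas[OF f(1)] .
  have cm: "cut c (1 / Suc n) \<in> borel_measurable borel" for n
    using bcont_meas[OF cut_bcont[of "1 / Suc n" c]] by simp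
  have cb: "bcont (cut c (1 / Suc n))" for n using cut_bcont[of "1 / Suc n" c] by simp
  let ?g = "\<lambda>n x. cut c (1 / Suc n) x * f x"
  let ?k = "\<lambda>n x. (1 - cut c (1 / Suc n) x) * f x"
  have bd1: "\<bar>?g n x\<bar> \<le> B" for n x
    using B[of x] cut_ge0[of c "1 / Suc n" x] cut_le1[of c "1 / Suc n" x]
    by (auto simp: abs_mult intro: order_trans[OF mult_right_mono[of _ 1]])
  have bd2: "\<bar>?k n x\<bar> \<le> B" for n x
    using B[of x] cut_ge0[of c "1 / Suc n" x] cut_le1[of c "1 / Suc n" x]
    by (auto simp: abs_mult intro: order_trans[OF mult_right_mono[of _ 1]])
  have l1: "(\<lambda>n. ?g n x) \<longlonglongrightarrow> indicator {..c} x * f x" for x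
    by (intro tendsto_mult cut_lim tendsto_const)
  have l2: "(\<lambda>n. ?k n x) \<longlonglongrightarrow> indicator {c<..} x * f x" for x
  proof -
    have "(\<lambda>n. ?k n x) \<longlonglongrightarrow> (1 - indicator {..c} x) * f x"
      by (intro tendsto_mult tendsto_diff cut_lim tendsto_const)
    moreover have "(1 - indicator {..c} x) * f x = indicator {c<..} x * f x"
      by (auto simp: indicator_def)
    ultimately show ?thesis by simp
  qed
  have gm: "?g n \<in> borel_measurable borel" for n using cm fm by measurable
  have km: "?k n \<in> borel_measurable borel" for n using cm fm by measurable
  have hm1: "(\<lambda>x. indicator {..c} x * f x) \<in> borel_measurable borel" using fm by measurable
  have hm2: "(\<lambda>x. indicator {c<..} x * f x) \<in> borel_measurable borel" using fm by measurable
  have le1: "(\<integral>x. ?g n x \<partial>\<zeta> s) \<le> (\<integral>x. ?g n x \<partial>\<zeta> t)" for n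
  proof -
    have "bcont (?g n)" using bcont_mult[OF cb f(1)] .
    moreover have "?g n x \<ge> 0" for x using cut_ge0 f(2) by simp
    ultimately show ?thesis using mono_onD[OF mono, of "?g n" s t] st by auto
  qed
  have le2: "(\<integral>x. ?k n x \<partial>\<zeta> s) \<le> (\<integral>x. ?k n x \<partial>\<zeta> t)" for n
  proof -
    have "bcont (?k n)" using bcont_mult[OF bcont_diff[OF bcont_const cb] f(1)] .
    moreover have "?k n x \<ge> 0" for x using cut_le1 f(2) by simp
    ultimately show ?thesis using mono_onD[OF mono, of "?k n" s t] st by auto
  qed
  show "(\<integral>x. indicator {..c} x * f x \<partial>\<zeta> s) \<le> (\<integral>x. indicator {..c} x * f x \<partial>\<zeta> t)"
    by (rule LIMSEQ_le[OF fin_meas_dom_conv[OF fs gm hm1 bd1 l1] fin_meas_dom_conv[OF ft gm hm1 bd1 l1]])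
       (use le1 in auto)
  show "(\<integral>x. indicator {c<..} x * f x \<partial>\<zeta> s) \<le> (\<integral>x. indicator {c<..} x * f x \<partial>\<zeta> t)"
    by (rule LIMSEQ_le[OF fin_meas_dom_conv[OF fs km hm2 bd2 l2] fin_meas_dom_conv[OF ft km hm2 bd2 l2]])
       (use le2 in auto)
qed

lemma up_mono_meas:
  assumes up: "cadlag_M_up \<zeta>" and st: "0 \<le> s" "s \<le> t"
  shows "measure (\<zeta> s) {..c} \<le> measure (\<zeta> t) {..c}" "measure (\<zeta> s) {c<..} \<le> measure (\<zeta> t) {c<..}"
proof -
  have fs: "fin_meas (\<zeta> s)" and ft: "fin_meas (\<zeta> t)"
    using up st unfolding cadlag_M_up_def cadlag_M_def by auto
  note u = up_mono_cut[OF up st bcont_const[of 1], of c, simplified]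
  show "measure (\<zeta> s) {..c} \<le> measure (\<zeta> t) {..c}" using u(1) fin_meas_space[OF fs] fin_meas_space[OF ft] by simp
  show "measure (\<zeta> s) {c<..} \<le> measure (\<zeta> t) {c<..}" using u(2) fin_meas_space[OF fs] fin_meas_space[OF ft] by simp
qed


definition rcut :: "real \<Rightarrow> real measure \<Rightarrow> real measure" where
  "rcut c M = density M (indicator {..c})"

lemma rcut_sets[simp]: "sets (rcut c M) = sets M" by (simp add: rcut_def)

lemma rcut_emeasure:
  "fin_meas M \<Longrightarrow> B \<in> sets borel \<Longrightarrow> emeasure (rcut c M) B = emeasure M ({..c} \<inter> B)"
  unfolding rcut_def by (rule emeasure_restricted) (auto simp: fin_meas_sets)

lemma rcut_fin: "fin_meas M \<Longrightarrow> fin_meas (rcut c M)"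
proof -
  assume M: "fin_meas M"
  have "emeasure (rcut c M) UNIV = emeasure M ({..c} \<inter> UNIV)" by (rule rcut_emeasure[OF M]) simp
  also have "\<dots> \<le> emeasure M UNIV" by (rule emeasure_mono) (simp_all add: M fin_meas_sets)
  finally have u: "emeasure (rcut c M) UNIV < \<infinity>" using M unfolding fin_meas_def by (meson order.strict_trans1)
  have "emeasure (rcut c M) {..<0} = emeasure M ({..c} \<inter> {..<0})" by (rule rcut_emeasure[OF M]) simp
  also have "\<dots> \<le> emeasure M {..<0}" by (rule emeasure_mono) (simp_all add: M fin_meas_sets)
  finally have "emeasure (rcut c M) {..<0} = 0" using M unfolding fin_meas_def by simp
  then show ?thesis using u M unfolding fin_meas_def by simp
qed

lemma rcut_measure:
  "fin_meas M \<Longrightarrow> B \<in> sets borel \<Longrightarrow> measure (rcut c M) B = measure M ({..c} \<inter> B)"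
  unfolding measure_def by (simp only: rcut_emeasure)

lemma rcut_integral:
  assumes M: "fin_meas M" and f: "f \<in> borel_measurable borel"
  shows "integral\<^sup>L (rcut c M) f = (\<integral>x. indicator {..c} x * (f x :: real) \<partial>M)"
proof -
  have "integral\<^sup>L (density M (\<lambda>x. ennreal (indicator {..c} x))) f = (\<integral>x. indicator {..c} x *\<^sub>R f x \<partial>M)"
  proof (rule integral_density)
    show "f \<in> borel_measurable M" by (rule fin_meas_meas[OF M f])
    show "indicator {..c} \<in> borel_measurable M" by (rule fin_meas_meas[OF M]) simp
  qed simp
  then show ?thesis by (simp add: ennreal_indicator rcut_def)
qed

lemma cut_antimono: "d > 0 \<Longrightarrow> x \<le> y \<Longrightarrow> cut c d y \<le> cut c d x"
  unfolding cut_def by (intro max.mono min.mono divide_right_mono) auto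

definition bump :: "real \<Rightarrow> real \<Rightarrow> real \<Rightarrow> real" where
  "bump c d x = cut c d x - cut c d (x + d)"

lemma bump_bcont: "d > 0 \<Longrightarrow> bcont (bump c d)"
  unfolding bump_def by (intro bcont_diff cut_bcont bcont_shift[of "cut c d"]) auto

lemma bump_meas: "d > 0 \<Longrightarrow> bump c d \<in> borel_measurable borel"
  using bcont_meas[OF bump_bcont] .

lemma bump_ge0: "d > 0 \<Longrightarrow> 0 \<le> bump c d x"
  unfolding bump_def using cut_antimono[of d x "x + d" c] by simp

lemma bump_le_ind: "d > 0 \<Longrightarrow> bump c d x \<le> indicator {c-d<..c+d} x"
proof -
  assume d: "d > 0"
  show ?thesis
  proof (cases "x \<le> c - d")
    case True
    then show ?thesis using d by (simp add: bump_def cut_one)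
  next
    case False
    show ?thesis
    proof (cases "x \<ge> c + d")
      case True
      then show ?thesis using d by (simp add: bump_def cut_zero)
    next
      case False
      then show ?thesis using \<open>\<not> x \<le> c - d\<close> cut_le1[of c d x] cut_ge0[of c d "x+d"]
        by (simp add: bump_def indicator_def)
    qed
  qed
qed

lemma bump_center: "d > 0 \<Longrightarrow> bump c d c = 1"
  by (simp add: bump_def cut_one cut_zero)

lemma bump_ge_ind: "d > 0 \<Longrightarrow> indicator {c} x \<le> bump c d x"
  using bump_center[of d c] bump_ge0[of d c x] by (auto simp: indicator_def)

lemma shrink_Inter:
  assumes "d0 > 0"
  shows "(\<Inter>n::nat. {c - d0 / (real n + 2)<..c + d0 / (real n + 2)}) = {c}"
    and "decseq (\<lambda>n::nat. {c - d0 / (real n + 2)<..c + d0 / (real n + 2)})"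
proof -
  show "decseq (\<lambda>n::nat. {c - d0 / (real n + 2)<..c + d0 / (real n + 2)})"
  proof (rule decseq_SucI)
    fix n :: nat
    have "d0 / (real (Suc n) + 2) \<le> d0 / (real n + 2)"
      using assms by (intro divide_left_mono) auto
    then show "{c - d0 / (real (Suc n) + 2)<..c + d0 / (real (Suc n) + 2)} \<subseteq> {c - d0 / (real n + 2)<..c + d0 / (real n + 2)}"
      by auto
  qed
  show "(\<Inter>n::nat. {c - d0 / (real n + 2)<..c + d0 / (real n + 2)}) = {c}"
  proof (intro equalityI subsetI)
    fix x assume x: "x \<in> (\<Inter>n::nat. {c - d0 / (real n + 2)<..c + d0 / (real n + 2)})"
    show "x \<in> {c}"
    proof (rule ccontr)
      assume "x \<notin> {c}"
      then have pos: "\<bar>x - c\<bar> / d0 > 0" using assms by auto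
      obtain n :: nat where n: "inverse (real (Suc n)) < \<bar>x - c\<bar> / d0"
        using reals_Archimedean[OF pos] by blast
      have "d0 / (real n + 2) \<le> d0 * inverse (real (Suc n))"
        using assms by (simp add: divide_inverse)
      also have "\<dots> < \<bar>x - c\<bar>" using n assms by (simp add: field_simps)
      finally have "d0 / (real n + 2) < \<bar>x - c\<bar>" .
      moreover have "x \<in> {c - d0 / (real n + 2)<..c + d0 / (real n + 2)}" using x by blast
      ultimately show False by auto
    qed
  qed (use assms in auto)
qed

lemma small_lim:
  assumes L: "fin_meas L" "emeasure L {c} = 0" and d0: "d0 > 0"
    and le: "\<And>d. 0 < d \<Longrightarrow> d < d0 \<Longrightarrow> x \<le> measure L {c-d<..c+d}"
  shows "x \<le> 0"
proof -
  let ?A = "\<lambda>n::nat. {c - d0 / (real n + 2)<..c + d0 / (real n + 2)}"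
  have "(\<lambda>n. measure L (?A n)) \<longlonglongrightarrow> measure L (\<Inter>n. ?A n)"
    by (rule finite_measure.finite_Lim_measure_decseq[OF fin_meas_finite[OF L(1)]])
       (use shrink_Inter[OF d0] L(1) in \<open>auto simp: fin_meas_sets\<close>)
  then have lim: "(\<lambda>n. measure L (?A n)) \<longlonglongrightarrow> 0"
    using shrink_Inter(1)[OF d0, of c] L by (simp add: measure_def)
  have "x \<le> measure L (?A n)" for n
  proof -
    have "0 < d0 / (real n + 2)" using d0 by simp
    moreover have "d0 / (real n + 2) < d0" using d0 by (simp add: divide_less_eq)
    ultimately
    show ?thesis using le by simp
  qed
  then show ?thesis by (intro LIMSEQ_le_const[OF lim]) auto
qed


lemma fin_meas_int_ind:
  assumes M: "fin_meas M" and A: "A \<in> sets borel"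
  shows "integrable M (indicator A :: real \<Rightarrow> real)"
  using M A fin_meas_emeasure_finite[OF M, of A] by (intro integrable_real_indicator) (auto simp: fin_meas_sets less_top)

lemma bump_int_le:
  assumes M: "fin_meas M" and d: "d > 0"
  shows "(\<integral>x. bump c d x \<partial>M) \<le> measure M {c-d<..c+d}"
proof -
  have "(\<integral>x. bump c d x \<partial>M) \<le> (\<integral>x. indicator {c-d<..c+d} x \<partial>M)"
  proof (rule integral_mono)
    show "integrable M (bump c d)"
    proof -
      have "\<bar>bump c d x\<bar> \<le> 1" for x
        using bump_ge0[OF d, of c x] bump_le_ind[OF d, of c x] by (cases "c - d < x \<and> x \<le> c + d") (auto simp: indicator_def)
      then show ?thesis using fin_meas_integrable[OF M bump_meas[OF d]] by blast
    qed
    show "integrable M (indicator {c-d<..c+d} :: real \<Rightarrow> real)"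
      by (rule fin_meas_int_ind[OF M]) simp
    show "bump c d x \<le> indicator {c-d<..c+d} x" for x by (rule bump_le_ind[OF d])
  qed
  then show ?thesis using fin_meas_space[OF M] by simp
qed

lemma bump_int_ge:
  assumes M: "fin_meas M" and d: "d > 0"
  shows "measure M {c} \<le> (\<integral>x. bump c d x \<partial>M)"
proof -
  have "(\<integral>x. indicator {c} x \<partial>M) \<le> (\<integral>x. bump c d x \<partial>M)"
  proof (rule integral_mono)
    show "integrable M (bump c d)"
    proof -
      have "\<bar>bump c d x\<bar> \<le> 1" for x
        using bump_ge0[OF d, of c x] bump_le_ind[OF d, of c x] by (cases "c - d < x \<and> x \<le> c + d") (auto simp: indicator_def)
      then show ?thesis using fin_meas_integrable[OF M bump_meas[OF d]] by blast
    qed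
    show "integrable M (indicator {c} :: real \<Rightarrow> real)"
      by (rule fin_meas_int_ind[OF M]) simp
    show "indicator {c} x \<le> bump c d x" for x by (rule bump_ge_ind[OF d])
  qed
  then show ?thesis using fin_meas_space[OF M] by simp
qed

lemma atom_zero_lim:
  assumes wt: "weak_tendsto \<zeta> \<nu> F" and F: "F \<noteq> bot" and nu: "fin_meas \<nu>"
    and L: "fin_meas L" "emeasure L {c} = 0" and d0: "d0 > 0"
    and bnd: "\<And>d. 0 < d \<Longrightarrow> d < d0 \<Longrightarrow>
       \<forall>\<^sub>F s in F. fin_meas (\<zeta> s) \<and> measure (\<zeta> s) {c-d<..c+d} \<le> measure L {c-d<..c+d}"
  shows "emeasure \<nu> {c} = 0"
proof -
  have "measure \<nu> {c} \<le> 0"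
  proof (rule small_lim[OF L d0])
    fix d assume d: "0 < d" "d < d0"
    have lim: "((\<lambda>s. integral\<^sup>L (\<zeta> s) (bump c d)) \<longlongrightarrow> integral\<^sup>L \<nu> (bump c d)) F"
      using wt bump_bcont[OF d(1)] unfolding weak_tendsto_def by blast
    have ev: "\<forall>\<^sub>F s in F. integral\<^sup>L (\<zeta> s) (bump c d) \<le> measure L {c-d<..c+d}"
      using bnd[OF d] by eventually_elim (use bump_int_le[OF _ d(1)] in \<open>auto intro: order_trans\<close>)
    have "integral\<^sup>L \<nu> (bump c d) \<le> measure L {c-d<..c+d}"
      by (rule tendsto_upperbound[OF lim ev F])
    then show "measure \<nu> {c} \<le> measure L {c-d<..c+d}"
      using bump_int_ge[OF nu d(1), of c] by linarith
  qed
  then have "measure \<nu> {c} = 0" using measure_nonneg[of \<nu> "{c}"] by linarith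
  then show ?thesis using fin_meas_emeasure[OF nu] by simp
qed

lemma atom_zero_pt:
  assumes M: "fin_meas M" and L: "fin_meas L" "emeasure L {c} = 0" and d0: "d0 > 0"
    and bnd: "\<And>d. 0 < d \<Longrightarrow> d < d0 \<Longrightarrow> measure M {c-d<..c+d} \<le> measure L {c-d<..c+d}"
  shows "emeasure M {c} = 0"
proof -
  have "measure M {c} \<le> 0"
  proof (rule small_lim[OF L d0])
    fix d assume d: "0 < d" "d < d0"
    have "measure M {c} \<le> measure M {c-d<..c+d}"
      by (rule finite_measure.finite_measure_mono[OF fin_meas_finite[OF M]]) (use d M in \<open>auto simp: fin_meas_sets\<close>)
    then show "measure M {c} \<le> measure L {c-d<..c+d}" using bnd[OF d] by linarith
  qed
  then have "measure M {c} = 0" using measure_nonneg[of M "{c}"] by linarith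
  then show ?thesis using fin_meas_emeasure[OF M] by simp
qed


lemma cut_shift: "d > 0 \<Longrightarrow> cut c d (x + d) = cut (c - d) d x"
  unfolding cut_def by (simp add: algebra_simps)

lemma restrict_err:
  assumes M: "fin_meas M" and d: "d > 0" and f: "bcont f" and B: "\<And>x. \<bar>f x\<bar> \<le> B"
  shows "\<bar>(\<integral>x. indicator {..c} x * f x \<partial>M) - (\<integral>x. f x * cut c d x \<partial>M)\<bar> \<le> B * (\<integral>x. bump c d x \<partial>M)"
proof -
  have fm: "f \<in> borel_measurable borel" by (rule bcont_meas[OF f])
  have cm: "cut c d \<in> borel_measurable borel" by (rule bcont_meas[OF cut_bcont[OF d]])
  have B0: "B \<ge> 0" using B[of 0] by linarith
  have i1: "integrable M (\<lambda>x. indicator {..c} x * f x)"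
    by (rule fin_meas_integrable[OF M _, of _ B]) (use fm B B0 in \<open>auto simp: indicator_def\<close>)
  have i2: "integrable M (\<lambda>x. f x * cut c d x)"
  proof (rule fin_meas_integrable[OF M _, of _ B])
    show "(\<lambda>x. f x * cut c d x) \<in> borel_measurable borel" using fm cm by measurable
    show "\<bar>f x * cut c d x\<bar> \<le> B" for x
      using B[of x] cut_ge0[of c d x] cut_le1[of c d x] mult_mono[of "\<bar>f x\<bar>" B "\<bar>cut c d x\<bar>" 1] B0
      by (auto simp: abs_mult)
  qed
  have i3: "integrable M (\<lambda>x. B * bump c d x)"
  proof -
    have "\<bar>bump c d x\<bar> \<le> 1" for x
      using bump_ge0[OF d, of c x] bump_le_ind[OF d, of c x] by (cases "c - d < x \<and> x \<le> c + d") (auto simp: indicator_def)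
    then have "integrable M (bump c d)" using fin_meas_integrable[OF M bump_meas[OF d]] by blast
    then show ?thesis by simp
  qed
  have pw: "\<bar>indicator {..c} x * f x - f x * cut c d x\<bar> \<le> B * bump c d x" for x
  proof (cases "x \<le> c")
    case True
    then show ?thesis using cut_one[OF d True] bump_ge0[OF d, of c x] B0 by simp
  next
    case False
    have "cut c d (x + d) = 0" using False d by (intro cut_zero) auto
    then have "bump c d x = cut c d x" by (simp add: bump_def)
    then show ?thesis using False B[of x] cut_ge0[of c d x] mult_right_mono[of "\<bar>f x\<bar>" B "cut c d x"]
      by (simp add: abs_mult mult.commute)
  qed
  have "\<bar>(\<integral>x. indicator {..c} x * f x \<partial>M) - (\<integral>x. f x * cut c d x \<partial>M)\<bar>
      = \<bar>\<integral>x. indicator {..c} x * f x - f x * cut c d x \<partial>M\<bar>"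
    using i1 i2 by simp
  also have "\<dots> \<le> (\<integral>x. B * bump c d x \<partial>M)"
    by (rule integral_abs_bound_integral) (use i1 i2 i3 pw in auto)
  also have "\<dots> = B * (\<integral>x. bump c d x \<partial>M)" by simp
  finally show ?thesis .
qed

lemma weak_restrict:
  assumes wt: "weak_tendsto \<zeta> \<nu> F" and ev: "\<forall>\<^sub>F s in F. fin_meas (\<zeta> s)"
    and nu: "fin_meas \<nu>" and at: "emeasure \<nu> {c} = 0"
  shows "weak_tendsto (\<lambda>s. rcut c (\<zeta> s)) (rcut c \<nu>) F"
  unfolding weak_tendsto_def
proof (intro allI impI)
  fix f assume f: "bcont f"
  obtain B where B: "B > 0" "\<And>x. \<bar>f x\<bar> \<le> B" using bcontE[OF f] by blast
  have fm: "f \<in> borel_measurable borel" by (rule bcont_meas[OF f])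
  let ?h = "\<lambda>x. indicator {..c} x * f x"
  have eq: "\<forall>\<^sub>F s in F. (\<integral>x. ?h x \<partial>\<zeta> s) = integral\<^sup>L (rcut c (\<zeta> s)) f"
    using ev by eventually_elim (simp add: rcut_integral[OF _ fm])
  have eqn: "integral\<^sup>L (rcut c \<nu>) f = (\<integral>x. ?h x \<partial>\<nu>)" by (simp add: rcut_integral[OF nu fm])
  have "((\<lambda>s. \<integral>x. ?h x \<partial>\<zeta> s) \<longlongrightarrow> (\<integral>x. ?h x \<partial>\<nu>)) F"
  proof (rule tendstoI)
    fix e :: real assume e: "e > 0"
    define \<eta> where "\<eta> = e / (4 * (B + 1))"
    have eta: "\<eta> > 0" using e B by (simp add: \<eta>_def)
    have Beta: "B * \<eta> < e / 4" using e B by (simp add: \<eta>_def field_simps)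
    let ?A = "\<lambda>n::nat. {c - 1 / (real n + 2)<..c + 1 / (real n + 2)}"
    have "(\<lambda>n. measure \<nu> (?A n)) \<longlonglongrightarrow> measure \<nu> (\<Inter>n. ?A n)"
      by (rule finite_measure.finite_Lim_measure_decseq[OF fin_meas_finite[OF nu]])
         (use shrink_Inter[of 1 c] nu in \<open>auto simp: fin_meas_sets\<close>)
    then have lim: "(\<lambda>n. measure \<nu> (?A n)) \<longlonglongrightarrow> 0"
      using shrink_Inter(1)[of 1 c] at by (simp add: measure_def)
    then have "\<forall>\<^sub>F n in sequentially. measure \<nu> (?A n) < \<eta>"
      using eta by (rule order_tendstoD)
    then obtain n where n: "measure \<nu> (?A n) < \<eta>" by (auto simp: eventually_sequentially)
    define d where "d = 1 / (real n + 2)"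
    have d: "d > 0" by (simp add: d_def)
    have vsmall: "(\<integral>x. bump c d x \<partial>\<nu>) < \<eta>"
      using bump_int_le[OF nu d, of c] n by (simp add: d_def)
    have v0: "(\<integral>x. bump c d x \<partial>\<nu>) \<ge> 0"
      by (rule integral_nonneg_AE) (simp add: bump_ge0[OF d])
    have l1: "((\<lambda>s. integral\<^sup>L (\<zeta> s) (\<lambda>x. f x * cut c d x)) \<longlongrightarrow> integral\<^sup>L \<nu> (\<lambda>x. f x * cut c d x)) F"
      using wt bcont_mult[OF f cut_bcont[OF d]] unfolding weak_tendsto_def by blast
    have l2: "((\<lambda>s. integral\<^sup>L (\<zeta> s) (bump c d)) \<longlongrightarrow> integral\<^sup>L \<nu> (bump c d)) F"
      using wt bump_bcont[OF d] unfolding weak_tendsto_def by blast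
    have e4: "e / 4 > 0" using e by simp
    have ev1: "\<forall>\<^sub>F s in F. dist (integral\<^sup>L (\<zeta> s) (\<lambda>x. f x * cut c d x)) (integral\<^sup>L \<nu> (\<lambda>x. f x * cut c d x)) < e / 4"
      by (rule tendstoD[OF l1 e4])
    have ev2: "\<forall>\<^sub>F s in F. dist (integral\<^sup>L (\<zeta> s) (bump c d)) (integral\<^sup>L \<nu> (bump c d)) < \<eta>"
      by (rule tendstoD[OF l2 eta])
    show "\<forall>\<^sub>F s in F. dist (\<integral>x. ?h x \<partial>\<zeta> s) (\<integral>x. ?h x \<partial>\<nu>) < e"
      using ev ev1 ev2
    proof eventually_elim
      case (elim s)
      let ?a = "\<integral>x. ?h x \<partial>\<zeta> s" and ?b = "\<integral>x. ?h x \<partial>\<nu>"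
      let ?p = "integral\<^sup>L (\<zeta> s) (\<lambda>x. f x * cut c d x)" and ?q = "integral\<^sup>L \<nu> (\<lambda>x. f x * cut c d x)"
      let ?u = "integral\<^sup>L (\<zeta> s) (bump c d)" and ?v = "integral\<^sup>L \<nu> (bump c d)"
      have a1: "\<bar>?a - ?p\<bar> \<le> B * ?u" using restrict_err[OF elim(1) d f B(2)] .
      have a2: "\<bar>?b - ?q\<bar> \<le> B * ?v" using restrict_err[OF nu d f B(2)] .
      have a3: "\<bar>?p - ?q\<bar> < e / 4" using elim(2) by (simp add: dist_real_def)
      have a4: "?u < 2 * \<eta>" using elim(3) vsmall by (simp add: dist_real_def)
      have a5: "B * ?u \<le> B * (2 * \<eta>)" using a4 B(1) by simp
      have a6: "B * ?v \<le> B * \<eta>" using vsmall B(1) by simp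
      show ?case unfolding dist_real_def using a1 a2 a3 a5 a6 Beta by linarith
    qed
  qed
  then show "((\<lambda>s. integral\<^sup>L (rcut c (\<zeta> s)) f) \<longlongrightarrow> integral\<^sup>L (rcut c \<nu>) f) F"
    unfolding eqn using eq by (rule Lim_transform_eventually)
qed


lemma fin_meas_union:
  assumes M: "fin_meas M" and A: "A \<in> sets borel" "B \<in> sets borel" "A \<inter> B = {}"
  shows "measure M (A \<union> B) = measure M A + measure M B"
  by (rule measure_Union) (use M A fin_meas_emeasure_finite[OF M, of A] fin_meas_emeasure_finite[OF M, of B] in \<open>auto simp: fin_meas_sets\<close>)

lemma fin_meas_compl_Ioi:
  assumes M: "fin_meas M"
  shows "measure M {c<..} = measure M UNIV - measure M {..c}"
proof -
  have u: "{..c} \<union> {c<..} = (UNIV :: real set)" by auto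
  have d: "{..c} \<inter> {c<..} = ({} :: real set)" by auto
  have "measure M UNIV = measure M {..c} + measure M {c<..}"
    using fin_meas_union[OF M _ _ d] u by simp
  then show ?thesis by simp
qed

lemma fin_meas_mono:
  assumes M: "fin_meas M" and A: "A \<subseteq> B" "B \<in> sets borel"
  shows "measure M A \<le> measure M B"
  by (rule finite_measure.finite_measure_mono[OF fin_meas_finite[OF M]]) (use A M in \<open>auto simp: fin_meas_sets\<close>)

lemma weak_tendsto_cong:
  assumes "weak_tendsto \<zeta> \<nu> F" "\<forall>\<^sub>F s in F. \<zeta>' s = \<zeta> s"
  shows "weak_tendsto \<zeta>' \<nu> F"
  unfolding weak_tendsto_def
proof (intro allI impI)
  fix f assume "bcont f"
  then have "((\<lambda>t. integral\<^sup>L (\<zeta> t) f) \<longlongrightarrow> integral\<^sup>L \<nu> f) F" using assms(1) by (simp add: weak_tendsto_def)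
  moreover have "\<forall>\<^sub>F s in F. integral\<^sup>L (\<zeta> s) f = integral\<^sup>L (\<zeta>' s) f"
    using assms(2) by eventually_elim simp
  ultimately show "((\<lambda>t. integral\<^sup>L (\<zeta>' t) f) \<longlongrightarrow> integral\<^sup>L \<nu> f) F" by (rule Lim_transform_eventually)
qed

lemma weak_tendsto_const_ev:
  assumes "\<forall>\<^sub>F s in F. \<zeta> s = \<nu>"
  shows "weak_tendsto \<zeta> \<nu> F"
  by (rule weak_tendsto_cong[of "\<lambda>_. \<nu>"]) (use assms in \<open>auto simp: weak_tendsto_def\<close>)

lemma cadlag_M_min:
  assumes c: "cadlag_M \<zeta>" and tau: "\<tau> \<ge> 0"
  shows "cadlag_M (\<lambda>t. \<zeta> (min t \<tau>))"
proof -
  have fin: "\<And>t. t \<ge> 0 \<Longrightarrow> fin_meas (\<zeta> t)" and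
    rt: "\<And>t. t \<ge> 0 \<Longrightarrow> weak_tendsto \<zeta> (\<zeta> t) (at_right t)" and
    lt: "\<And>t. t > 0 \<Longrightarrow> \<exists>\<nu>. fin_meas \<nu> \<and> weak_tendsto \<zeta> \<nu> (at_left t)"
    using c unfolding cadlag_M_def by auto
  have A: "fin_meas (\<zeta> (min t \<tau>))" if "t \<ge> 0" for t using fin[of "min t \<tau>"] that tau by simp
  have B: "weak_tendsto (\<lambda>t. \<zeta> (min t \<tau>)) (\<zeta> (min t \<tau>)) (at_right t)" if t: "t \<ge> 0" for t
  proof (cases "t < \<tau>")
    case True
    have ev: "\<forall>\<^sub>F s in at_right t. \<zeta> (min s \<tau>) = \<zeta> s"
      using eventually_at_right_real[OF True] by eventually_elim auto
    have "min t \<tau> = t" using True by simp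
    then show ?thesis using weak_tendsto_cong[OF rt[OF t] ev] by simp
  next
    case False
    have "\<forall>\<^sub>F s in at_right t. \<zeta> (min s \<tau>) = \<zeta> (min t \<tau>)"
      using eventually_at_right_less[of t] by eventually_elim (use False in auto)
    then show ?thesis by (rule weak_tendsto_const_ev)
  qed
  have C: "\<exists>\<nu>. fin_meas \<nu> \<and> weak_tendsto (\<lambda>t. \<zeta> (min t \<tau>)) \<nu> (at_left t)" if t: "t > 0" for t
  proof (cases "t \<le> \<tau>")
    case True
    obtain \<nu> where nu: "fin_meas \<nu>" "weak_tendsto \<zeta> \<nu> (at_left t)" using lt[OF t] by blast
    have ev: "\<forall>\<^sub>F s in at_left t. \<zeta> (min s \<tau>) = \<zeta> s"
      using eventually_at_left_real[OF t] by eventually_elim (use True in auto)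
    show ?thesis using nu(1) weak_tendsto_cong[OF nu(2) ev] by blast
  next
    case False
    then have "\<tau> < t" by simp
    have ev: "\<forall>\<^sub>F s in at_left t. \<zeta> (min s \<tau>) = \<zeta> \<tau>"
      using eventually_at_left_real[OF \<open>\<tau> < t\<close>] by eventually_elim auto
    show ?thesis using fin[OF tau] weak_tendsto_const_ev[OF ev] by blast
  qed
  show ?thesis unfolding cadlag_M_def using A B C by blast
qed

lemma cadlag_M_up_min:
  assumes c: "cadlag_M_up \<zeta>" and tau: "\<tau> \<ge> 0"
  shows "cadlag_M_up (\<lambda>t. \<zeta> (min t \<tau>))"
proof -
  have "cadlag_M (\<lambda>t. \<zeta> (min t \<tau>))" using c tau cadlag_M_min unfolding cadlag_M_up_def by blast
  moreover have "mono_on {0..} (\<lambda>t. integral\<^sup>L (\<zeta> (min t \<tau>)) f)" if "bcont f" "\<forall>x. f x \<ge> 0" for f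
  proof (rule mono_onI)
    fix s t :: real assume "s \<in> {0..}" "t \<in> {0..}" "s \<le> t"
    have m: "mono_on {0..} (\<lambda>t. integral\<^sup>L (\<zeta> t) f)" using c that unfolding cadlag_M_up_def by blast
    show "integral\<^sup>L (\<zeta> (min s \<tau>)) f \<le> integral\<^sup>L (\<zeta> (min t \<tau>)) f"
      by (rule mono_onD[OF m]) (use \<open>s \<in> {0..}\<close> \<open>t \<in> {0..}\<close> \<open>s \<le> t\<close> tau in auto)
  qed
  ultimately show ?thesis unfolding cadlag_M_up_def by blast
qed

definition bounded_by :: "(real \<Rightarrow> real measure) \<Rightarrow> real \<Rightarrow> bool" where
  "bounded_by \<zeta> \<tau> \<longleftrightarrow> (\<forall>T\<ge>0. \<exists>L. fin_meas L \<and> emeasure L {\<tau>} = 0 \<and>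
      (\<forall>s\<in>{0..T}. \<forall>a b. 0 \<le> a \<longrightarrow> a \<le> b \<longrightarrow> measure (\<zeta> s) {a<..b} \<le> measure L {a<..b}))"

lemma cadlag_M_rcut:
  assumes c: "cadlag_M \<zeta>" and tau: "\<tau> > 0" and bb: "bounded_by \<zeta> \<tau>"
  shows "cadlag_M (\<lambda>t. rcut \<tau> (\<zeta> t))"
proof -
  have fin: "\<And>t. t \<ge> 0 \<Longrightarrow> fin_meas (\<zeta> t)" and
    rt: "\<And>t. t \<ge> 0 \<Longrightarrow> weak_tendsto \<zeta> (\<zeta> t) (at_right t)" and
    lt: "\<And>t. t > 0 \<Longrightarrow> \<exists>\<nu>. fin_meas \<nu> \<and> weak_tendsto \<zeta> \<nu> (at_left t)"
    using c unfolding cadlag_M_def by auto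
  have A: "fin_meas (rcut \<tau> (\<zeta> t))" if "t \<ge> 0" for t using rcut_fin fin that by blast
  have B: "weak_tendsto (\<lambda>t. rcut \<tau> (\<zeta> t)) (rcut \<tau> (\<zeta> t)) (at_right t)" if t: "t \<ge> 0" for t
  proof (rule weak_restrict[OF rt[OF t] _ fin[OF t]])
    show "\<forall>\<^sub>F s in at_right t. fin_meas (\<zeta> s)"
      using eventually_at_right_less[of t] by eventually_elim (use fin t in auto)
    obtain L where L: "fin_meas L" "emeasure L {\<tau>} = 0"
      "\<forall>s\<in>{0..t}. \<forall>a b. 0 \<le> a \<longrightarrow> a \<le> b \<longrightarrow> measure (\<zeta> s) {a<..b} \<le> measure L {a<..b}"
      using bb t unfolding bounded_by_def by blast
    show "emeasure (\<zeta> t) {\<tau>} = 0"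
      by (rule atom_zero_pt[OF fin[OF t] L(1,2) tau]) (use L(3) t in auto)
  qed
  have C: "\<exists>\<nu>. fin_meas \<nu> \<and> weak_tendsto (\<lambda>t. rcut \<tau> (\<zeta> t)) \<nu> (at_left t)" if t: "t > 0" for t
  proof -
    obtain \<nu> where nu: "fin_meas \<nu>" "weak_tendsto \<zeta> \<nu> (at_left t)" using lt[OF t] by blast
    obtain L where L: "fin_meas L" "emeasure L {\<tau>} = 0"
      "\<forall>s\<in>{0..t}. \<forall>a b. 0 \<le> a \<longrightarrow> a \<le> b \<longrightarrow> measure (\<zeta> s) {a<..b} \<le> measure L {a<..b}"
      using bb t unfolding bounded_by_def by (meson less_imp_le)
    have evf: "\<forall>\<^sub>F s in at_left t. fin_meas (\<zeta> s)"
      using eventually_at_left_real[OF t] by eventually_elim (use fin in auto)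
    have at: "emeasure \<nu> {\<tau>} = 0"
    proof (rule atom_zero_lim[OF nu(2) _ nu(1) L(1,2) tau])
      show "at_left t \<noteq> bot" by simp
      fix d assume d: "0 < d" "d < \<tau>"
      show "\<forall>\<^sub>F s in at_left t. fin_meas (\<zeta> s) \<and> measure (\<zeta> s) {\<tau> - d<..\<tau> + d} \<le> measure L {\<tau> - d<..\<tau> + d}"
        using eventually_at_left_real[OF t] by eventually_elim (use fin L(3) d in auto)
    qed
    show ?thesis using weak_restrict[OF nu(2) evf nu(1) at] rcut_fin[OF nu(1)] by blast
  qed
  show ?thesis unfolding cadlag_M_def using A B C by blast
qed

lemma cadlag_M_up_rcut:
  assumes c: "cadlag_M_up \<zeta>" and tau: "\<tau> > 0" and bb: "bounded_by \<zeta> \<tau>"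
  shows "cadlag_M_up (\<lambda>t. rcut \<tau> (\<zeta> t))"
proof -
  have c0: "cadlag_M \<zeta>" using c unfolding cadlag_M_up_def by blast
  have fin: "\<And>t. t \<ge> 0 \<Longrightarrow> fin_meas (\<zeta> t)" using c0 unfolding cadlag_M_def by auto
  have "cadlag_M (\<lambda>t. rcut \<tau> (\<zeta> t))" using cadlag_M_rcut[OF c0 tau bb] .
  moreover have "mono_on {0..} (\<lambda>t. integral\<^sup>L (rcut \<tau> (\<zeta> t)) f)" if f: "bcont f" "\<forall>x. f x \<ge> 0" for f
  proof (rule mono_onI)
    fix s t :: real assume st: "s \<in> {0..}" "t \<in> {0..}" "s \<le> t"
    show "integral\<^sup>L (rcut \<tau> (\<zeta> s)) f \<le> integral\<^sup>L (rcut \<tau> (\<zeta> t)) f"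
      using up_mono_cut(1)[OF c _ st(3) f(1), of \<tau>] st f(2) fin
      by (simp add: rcut_integral bcont_meas[OF f(1)])
  qed
  ultimately show ?thesis unfolding cadlag_M_up_def by blast
qed

lemma weak_tot:
  assumes "weak_tendsto \<zeta> \<nu> F" "\<forall>\<^sub>F s in F. fin_meas (\<zeta> s)" "fin_meas \<nu>"
  shows "((\<lambda>s. measure (\<zeta> s) UNIV) \<longlongrightarrow> measure \<nu> UNIV) F"
proof -
  have "((\<lambda>s. integral\<^sup>L (\<zeta> s) (\<lambda>_. 1::real)) \<longlongrightarrow> integral\<^sup>L \<nu> (\<lambda>_. 1::real)) F"
    using assms(1) bcont_const[of "1::real"] unfolding weak_tendsto_def by blast
  moreover have "\<forall>\<^sub>F s in F. integral\<^sup>L (\<zeta> s) (\<lambda>_. 1::real) = measure (\<zeta> s) UNIV"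
    using assms(2) by eventually_elim (simp add: fin_meas_space)
  ultimately show ?thesis using assms(3) by (simp add: fin_meas_space Lim_transform_eventually)
qed

lemma tot_cadlag:
  assumes c: "cadlag_M \<zeta>"
  shows "cadlag_fun (\<lambda>t. measure (\<zeta> t) UNIV)"
proof -
  have fin: "\<And>t. t \<ge> 0 \<Longrightarrow> fin_meas (\<zeta> t)" and
    rt: "\<And>t. t \<ge> 0 \<Longrightarrow> weak_tendsto \<zeta> (\<zeta> t) (at_right t)" and
    lt: "\<And>t. t > 0 \<Longrightarrow> \<exists>\<nu>. fin_meas \<nu> \<and> weak_tendsto \<zeta> \<nu> (at_left t)"
    using c unfolding cadlag_M_def by auto
  have "continuous (at_right t) (\<lambda>t. measure (\<zeta> t) UNIV)" if t: "t \<ge> 0" for t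
  proof -
    have "\<forall>\<^sub>F s in at_right t. fin_meas (\<zeta> s)"
      using eventually_at_right_less[of t] by eventually_elim (use fin t in auto)
    then show ?thesis using weak_tot[OF rt[OF t] _ fin[OF t]] by (simp add: continuous_within)
  qed
  moreover have "\<exists>l. ((\<lambda>t. measure (\<zeta> t) UNIV) \<longlongrightarrow> l) (at_left t)" if t: "t > 0" for t
  proof -
    obtain \<nu> where nu: "fin_meas \<nu>" "weak_tendsto \<zeta> \<nu> (at_left t)" using lt[OF t] by blast
    have "\<forall>\<^sub>F s in at_left t. fin_meas (\<zeta> s)"
      using eventually_at_left_real[OF t] by eventually_elim (use fin in auto)
    then show ?thesis using weak_tot[OF nu(2) _ nu(1)] by blast
  qed
  ultimately show ?thesis unfolding cadlag_fun_def by blast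
qed

lemma rc_open:
  assumes c: "cadlag_M_up \<zeta>" and t: "t \<ge> 0"
  shows "continuous (at_right t) (\<lambda>s. measure (\<zeta> s) {x<..})"
proof -
  have c0: "cadlag_M \<zeta>" using c unfolding cadlag_M_up_def by blast
  have fin: "\<And>t. t \<ge> 0 \<Longrightarrow> fin_meas (\<zeta> t)" and
    rt: "\<And>t. t \<ge> 0 \<Longrightarrow> weak_tendsto \<zeta> (\<zeta> t) (at_right t)"
    using c0 unfolding cadlag_M_def by auto
  have evf: "\<forall>\<^sub>F s in at_right t. fin_meas (\<zeta> s) \<and> t < s"
    using eventually_at_right_less[of t] by eventually_elim (use fin t in auto)
  have tot: "((\<lambda>s. measure (\<zeta> s) UNIV) \<longlongrightarrow> measure (\<zeta> t) UNIV) (at_right t)"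
  proof -
    have "\<forall>\<^sub>F s in at_right t. fin_meas (\<zeta> s)" using evf by (rule eventually_mono) auto
    then show ?thesis using weak_tot[OF rt[OF t] _ fin[OF t]] by blast
  qed
  have up: "((\<lambda>s. measure (\<zeta> s) UNIV - measure (\<zeta> t) {..x}) \<longlongrightarrow> measure (\<zeta> t) {x<..}) (at_right t)"
    using tendsto_diff[OF tot tendsto_const[of "measure (\<zeta> t) {..x}"]] fin_meas_compl_Ioi[OF fin[OF t], of x] by simp
  have "((\<lambda>s. measure (\<zeta> s) {x<..}) \<longlongrightarrow> measure (\<zeta> t) {x<..}) (at_right t)"
  proof (rule tendsto_sandwich[OF _ _ tendsto_const up])
    show "\<forall>\<^sub>F s in at_right t. measure (\<zeta> t) {x<..} \<le> measure (\<zeta> s) {x<..}"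
      using evf by eventually_elim (use up_mono_meas(2)[OF c t] in auto)
    show "\<forall>\<^sub>F s in at_right t. measure (\<zeta> s) {x<..} \<le> measure (\<zeta> s) UNIV - measure (\<zeta> t) {..x}"
      using evf by eventually_elim (use up_mono_meas(1)[OF c t] fin_meas_compl_Ioi in \<open>fastforce\<close>)
  qed
  then show ?thesis by (simp add: continuous_within)
qed

lemma cadlag_fun_cong:
  assumes "cadlag_fun f" "\<And>t. t \<ge> 0 \<Longrightarrow> f t = g t"
  shows "cadlag_fun g"
proof -
  have "continuous (at_right t) g" if t: "t \<ge> 0" for t
  proof -
    have "(f \<longlongrightarrow> f t) (at_right t)" using assms(1) t by (simp add: cadlag_fun_def continuous_within)
    moreover have "\<forall>\<^sub>F s in at_right t. f s = g s"
      using eventually_at_right_less[of t] by eventually_elim (use t assms(2) in auto)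
    ultimately have "(g \<longlongrightarrow> f t) (at_right t)" by (rule Lim_transform_eventually)
    then show ?thesis using assms(2)[OF t] by (simp add: continuous_within)
  qed
  moreover have "\<exists>l. (g \<longlongrightarrow> l) (at_left t)" if t: "t > 0" for t
  proof -
    obtain l where "(f \<longlongrightarrow> l) (at_left t)" using assms(1) t by (auto simp: cadlag_fun_def)
    moreover have "\<forall>\<^sub>F s in at_left t. f s = g s"
      using eventually_at_left_real[OF t] by eventually_elim (use assms(2) in auto)
    ultimately show ?thesis using Lim_transform_eventually by blast
  qed
  ultimately show ?thesis by (simp add: cadlag_fun_def)
qed

lemma cadlag_fun_add:
  assumes f: "cadlag_fun f" and g: "cadlag_fun g" shows "cadlag_fun (\<lambda>t. f t + g t)"
  unfolding cadlag_fun_def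
proof (intro conjI allI impI)
  fix t :: real assume "t \<ge> 0"
  then show "continuous (at_right t) (\<lambda>t. f t + g t)"
    using f g unfolding cadlag_fun_def by (simp add: continuous_add)
next
  fix t :: real assume "t > 0"
  then obtain l1 l2 where "(f \<longlongrightarrow> l1) (at_left t)" "(g \<longlongrightarrow> l2) (at_left t)"
    using f g unfolding cadlag_fun_def by blast
  then show "\<exists>l. ((\<lambda>t. f t + g t) \<longlongrightarrow> l) (at_left t)" using tendsto_add by blast
qed

lemma cadlag_fun_diff:
  assumes f: "cadlag_fun f" and g: "cadlag_fun g" shows "cadlag_fun (\<lambda>t. f t - g t)"
  unfolding cadlag_fun_def
proof (intro conjI allI impI)
  fix t :: real assume "t \<ge> 0"
  then show "continuous (at_right t) (\<lambda>t. f t - g t)"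
    using f g unfolding cadlag_fun_def by (simp add: continuous_diff)
next
  fix t :: real assume "t > 0"
  then obtain l1 l2 where "(f \<longlongrightarrow> l1) (at_left t)" "(g \<longlongrightarrow> l2) (at_left t)"
    using f g unfolding cadlag_fun_def by blast
  then show "\<exists>l. ((\<lambda>t. f t - g t) \<longlongrightarrow> l) (at_left t)" using tendsto_diff by blast
qed

lemma cadlag_fun_min:
  assumes f: "cadlag_fun f" and tau: "\<tau> \<ge> 0"
  shows "cadlag_fun (\<lambda>t. f (min t \<tau>))"
proof -
  have "continuous (at_right t) (\<lambda>t. f (min t \<tau>))" if t: "t \<ge> 0" for t
  proof (cases "t < \<tau>")
    case True
    have l: "(f \<longlongrightarrow> f t) (at_right t)" using f t by (simp add: cadlag_fun_def continuous_within)
    have ev: "\<forall>\<^sub>F s in at_right t. f s = f (min s \<tau>)"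
      using eventually_at_right_real[OF True] by eventually_elim auto
    have "((\<lambda>t. f (min t \<tau>)) \<longlongrightarrow> f t) (at_right t)" by (rule Lim_transform_eventually[OF l ev])
    then show ?thesis using True by (simp add: continuous_within)
  next
    case False
    have ev: "\<forall>\<^sub>F s in at_right t. f \<tau> = f (min s \<tau>)"
      using eventually_at_right_less[of t] by eventually_elim (use False in auto)
    have "((\<lambda>t. f (min t \<tau>)) \<longlongrightarrow> f \<tau>) (at_right t)" by (rule Lim_transform_eventually[OF tendsto_const ev])
    then show ?thesis using False by (simp add: continuous_within)
  qed
  moreover have "\<exists>l. ((\<lambda>t. f (min t \<tau>)) \<longlongrightarrow> l) (at_left t)" if t: "t > 0" for t
  proof (cases "t \<le> \<tau>")
    case True
    obtain l where l: "(f \<longlongrightarrow> l) (at_left t)" using f t by (auto simp: cadlag_fun_def)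
    have ev: "\<forall>\<^sub>F s in at_left t. f s = f (min s \<tau>)"
      using eventually_at_left_real[OF t] by eventually_elim (use True in auto)
    show ?thesis using Lim_transform_eventually[OF l ev] by (rule exI)
  next
    case False
    then have "\<tau> < t" by simp
    have ev: "\<forall>\<^sub>F s in at_left t. f \<tau> = f (min s \<tau>)"
      using eventually_at_left_real[OF \<open>\<tau> < t\<close>] by eventually_elim auto
    show ?thesis using Lim_transform_eventually[OF tendsto_const ev] by (rule exI)
  qed
  ultimately show ?thesis by (simp add: cadlag_fun_def)
qed


lemma meas_Iic:
  assumes M: "fin_meas M" and x: "0 \<le> x"
  shows "measure M {..x} = measure M {0..x}"
proof -
  have u: "{..x} = {..<0} \<union> {0..x}" using x by auto
  have "measure M {..<0} = 0" using fin_meas_neg[OF M] by (simp add: measure_def)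
  then show ?thesis unfolding u by (subst fin_meas_union[OF M]) auto
qed

lemma meas_Ioc:
  assumes M: "fin_meas M" and ab: "0 \<le> a" "a \<le> b"
  shows "measure M {a<..b} = measure M {0..b} - measure M {0..a}"
proof -
  have u: "{0..b} = {0..a} \<union> {a<..b}" using ab by auto
  show ?thesis unfolding u by (subst fin_meas_union[OF M]) auto
qed

lemma meas_nonneg_ennreal: "ennreal (measure M A) = 0 \<longleftrightarrow> measure M A = 0"
  using measure_nonneg[of M A] by simp

locale edfs =
  fixes \<alpha> :: "real \<Rightarrow> real measure" and \<mu> :: "real \<Rightarrow> real" and \<tau> :: real
    and \<xi> \<beta> \<beta>s \<beta>r :: "real \<Rightarrow> real measure" and \<rho> \<iota> :: "real \<Rightarrow> real"
    and \<xi>0 :: "real measure" and \<alpha>h ar :: "real \<Rightarrow> real measure"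
  assumes tau: "\<tau> > 0"
    and S: "hard_EDF_FME \<alpha> \<mu> \<xi> \<beta> \<beta>s \<beta>r \<rho> \<iota>"
    and x0: "atomless_meas \<xi>0" and ah: "cont_M_atomless_up \<alpha>h"
    and asets: "\<forall>t\<ge>0. sets (\<alpha> t) = sets borel"
    and adec: "\<forall>t\<ge>0. \<forall>B\<in>sets borel. emeasure (\<alpha> t) B = emeasure \<xi>0 B + emeasure (\<alpha>h t) B"
    and arep: "\<forall>t\<ge>0. \<forall>B\<in>sets borel. emeasure (\<alpha>h t) B = (\<integral>\<^sup>+ s\<in>{0..t}. emeasure (ar s) B \<partial>lborel)"
    and aa: "\<forall>t\<ge>0. fin_meas (ar t) \<and> emeasure (ar t) {..<t} = 0"
begin

lemma S': "cadlag_M \<xi> \<and> cadlag_M_up \<beta> \<and> cadlag_M_up \<beta>s \<and> cadlag_M_up \<beta>r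
   \<and> nonneg_nondec_cadlag \<rho> \<and> nonneg_nondec_cadlag \<iota>
   \<and> (\<forall>t\<ge>0. \<forall>B\<in>sets borel. emeasure (\<beta> t) B = emeasure (\<beta>s t) B + emeasure (\<beta>r t) B)
   \<and> (\<forall>t\<ge>0. \<iota> t = \<mu> t - measure (\<beta>s t) {0..})
   \<and> (\<forall>t\<ge>0. emeasure (\<beta>r t) {t<..} = 0)
   \<and> (\<forall>t\<ge>0. \<forall>x\<ge>0. measure (\<xi> t) {0..x} = measure (\<alpha> t) {0..x} - measure (\<beta> t) {0..x})
   \<and> (\<forall>x\<ge>0. (\<integral>\<^sup>+ t\<in>{0..}. ennreal (measure (\<xi> t) {0..x}) \<partial>stieltjes \<iota>) = 0)
   \<and> (\<forall>x\<ge>0. (\<integral>\<^sup>+ t\<in>{0..}. ennreal (measure (\<xi> t) {0..x})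
                 \<partial>stieltjes (\<lambda>s. measure (\<beta> s) {x<..})) = 0)
   \<and> (\<forall>t\<ge>0. \<rho> t = measure (\<beta>r t) {0..t} \<and> \<rho> t = measure (\<beta>r t) {0..})
   \<and> (\<forall>t\<ge>0. emeasure (\<xi> t) {0..<t} = 0)
   \<and> (\<integral>\<^sup>+ t\<in>{0..}. (if inf_supp (\<xi> t) > ereal t then 1 else 0) \<partial>stieltjes \<rho>) = 0"
  using S unfolding hard_EDF_FME_def .

lemmas S1 = S'[THEN conjunct1]
lemmas S2 = S'[THEN conjunct2, THEN conjunct1]
lemmas S3 = S'[THEN conjunct2, THEN conjunct2, THEN conjunct1]
lemmas S4 = S'[THEN conjunct2, THEN conjunct2, THEN conjunct2, THEN conjunct1]
lemmas S5 = S'[THEN conjunct2, THEN conjunct2, THEN conjunct2, THEN conjunct2, THEN conjunct1]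
lemmas S6 = S'[THEN conjunct2, THEN conjunct2, THEN conjunct2, THEN conjunct2, THEN conjunct2, THEN conjunct1]
lemmas S7 = S'[THEN conjunct2, THEN conjunct2, THEN conjunct2, THEN conjunct2, THEN conjunct2, THEN conjunct2, THEN conjunct1]
lemmas S8 = S'[THEN conjunct2, THEN conjunct2, THEN conjunct2, THEN conjunct2, THEN conjunct2, THEN conjunct2, THEN conjunct2, THEN conjunct1]
lemmas S9 = S'[THEN conjunct2, THEN conjunct2, THEN conjunct2, THEN conjunct2, THEN conjunct2, THEN conjunct2, THEN conjunct2, THEN conjunct2, THEN conjunct1]
lemmas S10 = S'[THEN conjunct2, THEN conjunct2, THEN conjunct2, THEN conjunct2, THEN conjunct2, THEN conjunct2, THEN conjunct2, THEN conjunct2, THEN conjunct2, THEN conjunct1]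
lemmas S11 = S'[THEN conjunct2, THEN conjunct2, THEN conjunct2, THEN conjunct2, THEN conjunct2, THEN conjunct2, THEN conjunct2, THEN conjunct2, THEN conjunct2, THEN conjunct2, THEN conjunct1]
lemmas S12 = S'[THEN conjunct2, THEN conjunct2, THEN conjunct2, THEN conjunct2, THEN conjunct2, THEN conjunct2, THEN conjunct2, THEN conjunct2, THEN conjunct2, THEN conjunct2, THEN conjunct2, THEN conjunct1]
lemmas S13 = S'[THEN conjunct2, THEN conjunct2, THEN conjunct2, THEN conjunct2, THEN conjunct2, THEN conjunct2, THEN conjunct2, THEN conjunct2, THEN conjunct2, THEN conjunct2, THEN conjunct2, THEN conjunct2, THEN conjunct1]
lemmas S14 = S'[THEN conjunct2, THEN conjunct2, THEN conjunct2, THEN conjunct2, THEN conjunct2, THEN conjunct2, THEN conjunct2, THEN conjunct2, THEN conjunct2, THEN conjunct2, THEN conjunct2, THEN conjunct2, THEN conjunct2, THEN conjunct1]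
lemmas S15 = S'[THEN conjunct2, THEN conjunct2, THEN conjunct2, THEN conjunct2, THEN conjunct2, THEN conjunct2, THEN conjunct2, THEN conjunct2, THEN conjunct2, THEN conjunct2, THEN conjunct2, THEN conjunct2, THEN conjunct2, THEN conjunct2]

lemma Sc: "cadlag_M \<xi>" "cadlag_M_up \<beta>" "cadlag_M_up \<beta>s" "cadlag_M_up \<beta>r"
  "nonneg_nondec_cadlag \<rho>" "nonneg_nondec_cadlag \<iota>"
  by (rule S1, rule S2, rule S3, rule S4, rule S5, rule S6)

lemma Sadd: "t \<ge> 0 \<Longrightarrow> B \<in> sets borel \<Longrightarrow> emeasure (\<beta> t) B = emeasure (\<beta>s t) B + emeasure (\<beta>r t) B"
  using S7 by blast
lemma Siota: "t \<ge> 0 \<Longrightarrow> \<iota> t = \<mu> t - measure (\<beta>s t) {0..}"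
  using S8 by blast
lemma Sbr: "t \<ge> 0 \<Longrightarrow> emeasure (\<beta>r t) {t<..} = 0"
  using S9 by blast
lemma Sxi: "t \<ge> 0 \<Longrightarrow> x \<ge> 0 \<Longrightarrow> measure (\<xi> t) {0..x} = measure (\<alpha> t) {0..x} - measure (\<beta> t) {0..x}"
  using S10 by blast
lemma Sint1: "x \<ge> 0 \<Longrightarrow> (\<integral>\<^sup>+ t\<in>{0..}. ennreal (measure (\<xi> t) {0..x}) \<partial>stieltjes \<iota>) = 0"
  using S11 by blast
lemma Sint2: "x \<ge> 0 \<Longrightarrow> (\<integral>\<^sup>+ t\<in>{0..}. ennreal (measure (\<xi> t) {0..x})
                 \<partial>stieltjes (\<lambda>s. measure (\<beta> s) {x<..})) = 0"
  using S12 by blast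
lemma Srho: "t \<ge> 0 \<Longrightarrow> \<rho> t = measure (\<beta>r t) {0..t}" "t \<ge> 0 \<Longrightarrow> \<rho> t = measure (\<beta>r t) {0..}"
  using S13 by blast+
lemma Sxi0: "t \<ge> 0 \<Longrightarrow> emeasure (\<xi> t) {0..<t} = 0"
  using S14 by blast
lemma Ssig: "(\<integral>\<^sup>+ t\<in>{0..}. (if inf_supp (\<xi> t) > ereal t then 1 else 0) \<partial>stieltjes \<rho>) = 0"
  by (rule S15)

lemma fin_xi: "t \<ge> 0 \<Longrightarrow> fin_meas (\<xi> t)"
  using Sc(1) unfolding cadlag_M_def by auto
lemma fin_b: "t \<ge> 0 \<Longrightarrow> fin_meas (\<beta> t)"
  using Sc(2) unfolding cadlag_M_up_def cadlag_M_def by auto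
lemma fin_bs: "t \<ge> 0 \<Longrightarrow> fin_meas (\<beta>s t)"
  using Sc(3) unfolding cadlag_M_up_def cadlag_M_def by auto
lemma fin_br: "t \<ge> 0 \<Longrightarrow> fin_meas (\<beta>r t)"
  using Sc(4) unfolding cadlag_M_up_def cadlag_M_def by auto

lemma fin_x0: "fin_meas \<xi>0" and x0_atom: "emeasure \<xi>0 {c} = 0"
  using x0 unfolding atomless_meas_def by auto
lemma ah_up: "cadlag_M_up \<alpha>h" using ah unfolding cont_M_atomless_up_def by auto
lemma fin_ah: "t \<ge> 0 \<Longrightarrow> fin_meas (\<alpha>h t)"
  using ah unfolding cont_M_atomless_up_def atomless_meas_def by auto
lemma ah_atom: "t \<ge> 0 \<Longrightarrow> emeasure (\<alpha>h t) {c} = 0"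
  using ah unfolding cont_M_atomless_up_def atomless_meas_def by auto

lemma fin_al: "t \<ge> 0 \<Longrightarrow> fin_meas (\<alpha> t)"
proof -
  assume t: "t \<ge> 0"
  have "emeasure (\<alpha> t) UNIV = emeasure \<xi>0 UNIV + emeasure (\<alpha>h t) UNIV" using adec t by auto
  moreover have "emeasure (\<alpha> t) {..<0} = emeasure \<xi>0 {..<0} + emeasure (\<alpha>h t) {..<0}" using adec t by auto
  ultimately show ?thesis using fin_x0 fin_ah[OF t] asets t unfolding fin_meas_def by auto
qed

lemma al_atom: "t \<ge> 0 \<Longrightarrow> emeasure (\<alpha> t) {c} = 0"
  using adec x0_atom ah_atom by auto

lemma al_meas: "t \<ge> 0 \<Longrightarrow> B \<in> sets borel \<Longrightarrow> measure (\<alpha> t) B = measure \<xi>0 B + measure (\<alpha>h t) B"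
proof -
  assume t: "t \<ge> 0" and B: "B \<in> sets borel"
  have "ennreal (measure (\<alpha> t) B) = ennreal (measure \<xi>0 B) + ennreal (measure (\<alpha>h t) B)"
    using adec t B fin_meas_emeasure[OF fin_al[OF t]] fin_meas_emeasure[OF fin_x0] fin_meas_emeasure[OF fin_ah[OF t]]
    by metis
  then show ?thesis by (simp add: ennreal_plus[symmetric] del: ennreal_plus)
qed

lemma ah_mono: "0 \<le> s \<Longrightarrow> s \<le> t \<Longrightarrow> B \<in> sets borel \<Longrightarrow> emeasure (\<alpha>h s) B \<le> emeasure (\<alpha>h t) B"
proof -
  assume st: "0 \<le> s" "s \<le> t" and B: "B \<in> sets borel"
  have "(\<integral>\<^sup>+ x\<in>{0..s}. emeasure (ar x) B \<partial>lborel) \<le> (\<integral>\<^sup>+ x\<in>{0..t}. emeasure (ar x) B \<partial>lborel)"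
    by (rule nn_integral_mono) (use st in \<open>auto simp: indicator_def\<close>)
  then show ?thesis using arep st B by simp
qed

lemma al_mono: "0 \<le> s \<Longrightarrow> s \<le> t \<Longrightarrow> B \<in> sets borel \<Longrightarrow> measure (\<alpha> s) B \<le> measure (\<alpha> t) B"
proof -
  assume st: "0 \<le> s" "s \<le> t" and B: "B \<in> sets borel"
  have "emeasure (\<alpha> s) B \<le> emeasure (\<alpha> t) B"
    using adec st B ah_mono[OF st B] by (auto intro: add_left_mono)
  then show ?thesis
    using fin_meas_emeasure[OF fin_al, of s B] fin_meas_emeasure[OF fin_al, of t B] st by simp
qed

lemma al_freeze:
  assumes y: "0 \<le> y" "y \<le> \<tau>" "\<tau> \<le> t"
  shows "measure (\<alpha> t) {0..y} = measure (\<alpha> \<tau>) {0..y}"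
proof -
  have "(\<integral>\<^sup>+ s\<in>{0..t}. emeasure (ar s) {0..y} \<partial>lborel) = (\<integral>\<^sup>+ s\<in>{0..\<tau>}. emeasure (ar s) {0..y} \<partial>lborel)"
  proof (rule nn_integral_cong)
    fix s :: real
    show "emeasure (ar s) {0..y} * indicator {0..t} s = emeasure (ar s) {0..y} * indicator {0..\<tau>} s"
    proof (cases "\<tau> < s \<and> s \<le> t")
      case True
      then have s0: "s \<ge> 0" using tau by simp
      have "emeasure (ar s) {0..y} \<le> emeasure (ar s) {..<s}"
        by (rule emeasure_mono) (use True y aa s0 in \<open>auto simp: fin_meas_sets\<close>)
      then have "emeasure (ar s) {0..y} = 0" using aa s0 by auto
      then show ?thesis by simp
    next
      case False
      then show ?thesis using y by (auto simp: indicator_def)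
    qed
  qed
  then have "emeasure (\<alpha>h t) {0..y} = emeasure (\<alpha>h \<tau>) {0..y}" using arep y tau by simp
  then have "emeasure (\<alpha> t) {0..y} = emeasure (\<alpha> \<tau>) {0..y}" using adec y tau by simp
  then show ?thesis by (simp add: measure_def)
qed

lemma bs_le_b: "t \<ge> 0 \<Longrightarrow> B \<in> sets borel \<Longrightarrow> measure (\<beta>s t) B \<le> measure (\<beta> t) B"
  using Sadd[of t B] fin_meas_emeasure[OF fin_b, of t B] fin_meas_emeasure[OF fin_bs, of t B]
    fin_meas_emeasure[OF fin_br, of t B]
  by (simp add: ennreal_plus[symmetric] del: ennreal_plus)

lemma b_split: "t \<ge> 0 \<Longrightarrow> B \<in> sets borel \<Longrightarrow> measure (\<beta> t) B = measure (\<beta>s t) B + measure (\<beta>r t) B"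
  using Sadd[of t B] fin_meas_emeasure[OF fin_b, of t B] fin_meas_emeasure[OF fin_bs, of t B]
    fin_meas_emeasure[OF fin_br, of t B]
  by (simp add: ennreal_plus[symmetric] del: ennreal_plus)

lemma xi_Ioc:
  assumes t: "t \<ge> 0" and ab: "0 \<le> a" "a \<le> b"
  shows "measure (\<xi> t) {a<..b} = measure (\<alpha> t) {a<..b} - measure (\<beta> t) {a<..b}"
  using Sxi[OF t, of a] Sxi[OF t, of b] ab meas_Ioc[OF fin_xi[OF t] ab] meas_Ioc[OF fin_al[OF t] ab]
    meas_Ioc[OF fin_b[OF t] ab] by simp

lemma b_le_al: "t \<ge> 0 \<Longrightarrow> 0 \<le> a \<Longrightarrow> a \<le> b \<Longrightarrow> measure (\<beta> t) {a<..b} \<le> measure (\<alpha> t) {a<..b}"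
  using xi_Ioc[of t a b] measure_nonneg[of "\<xi> t" "{a<..b}"] by linarith

lemma xi_le_al: "t \<ge> 0 \<Longrightarrow> 0 \<le> a \<Longrightarrow> a \<le> b \<Longrightarrow> measure (\<xi> t) {a<..b} \<le> measure (\<alpha> t) {a<..b}"
  using xi_Ioc[of t a b] measure_nonneg[of "\<beta> t" "{a<..b}"] by linarith

lemma bb_gen:
  assumes le: "\<And>s a b. s \<ge> 0 \<Longrightarrow> 0 \<le> a \<Longrightarrow> a \<le> b \<Longrightarrow> measure (\<zeta> s) {a<..b} \<le> measure (\<alpha> s) {a<..b}"
  shows "bounded_by (\<lambda>t. \<zeta> (min t \<tau>)) \<tau>"
  unfolding bounded_by_def
proof (intro allI impI)
  fix T :: real assume T: "T \<ge> 0"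
  show "\<exists>L. fin_meas L \<and> emeasure L {\<tau>} = 0 \<and> (\<forall>s\<in>{0..T}. \<forall>a b. 0 \<le> a \<longrightarrow> a \<le> b \<longrightarrow>
          measure (\<zeta> (min s \<tau>)) {a<..b} \<le> measure L {a<..b})"
  proof (intro exI conjI ballI allI impI)
    show "fin_meas (\<alpha> T)" using fin_al[OF T] .
    show "emeasure (\<alpha> T) {\<tau>} = 0" using al_atom[OF T] .
    fix s a b :: real assume s: "s \<in> {0..T}" and ab: "0 \<le> a" "a \<le> b"
    have "measure (\<zeta> (min s \<tau>)) {a<..b} \<le> measure (\<alpha> (min s \<tau>)) {a<..b}"
      using le[of "min s \<tau>" a b] s ab tau by simp
    also have "\<dots> \<le> measure (\<alpha> T) {a<..b}"
      by (rule al_mono) (use s tau in auto)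
    finally show "measure (\<zeta> (min s \<tau>)) {a<..b} \<le> measure (\<alpha> T) {a<..b}" .
  qed
qed

lemma bb_xi: "bounded_by (\<lambda>t. \<xi> (min t \<tau>)) \<tau>"
  by (rule bb_gen) (rule xi_le_al)
lemma bb_b: "bounded_by (\<lambda>t. \<beta> (min t \<tau>)) \<tau>"
  by (rule bb_gen) (rule b_le_al)
lemma bb_bs: "bounded_by (\<lambda>t. \<beta>s (min t \<tau>)) \<tau>"
proof (rule bb_gen)
  fix s p q :: real assume "s \<ge> 0" "0 \<le> p" "p \<le> q"
  then show "measure (\<beta>s s) {p<..q} \<le> measure (\<alpha> s) {p<..q}"
    using bs_le_b[of s "{p<..q}"] b_le_al[of s p q] by simp
qed

end


context edfs begin

definition "xic t = rcut \<tau> (\<xi> (min t \<tau>))"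
definition "bc t = rcut \<tau> (\<beta> (min t \<tau>))"
definition "bsc t = rcut \<tau> (\<beta>s (min t \<tau>))"
definition "brc t = \<beta>r (min t \<tau>)"
definition "rhoc t = \<rho> (min t \<tau>)"
definition "iotac t = \<mu> t - measure (bsc t) {0..}"

lemma tau0: "\<tau> \<ge> 0" using tau by simp

lemma cad_xic: "cadlag_M xic"
  unfolding xic_def by (rule cadlag_M_rcut[OF cadlag_M_min[OF Sc(1) tau0] tau bb_xi])
lemma cad_bc: "cadlag_M_up bc"
  unfolding bc_def by (rule cadlag_M_up_rcut[OF cadlag_M_up_min[OF Sc(2) tau0] tau bb_b])
lemma cad_bsc: "cadlag_M_up bsc"
  unfolding bsc_def by (rule cadlag_M_up_rcut[OF cadlag_M_up_min[OF Sc(3) tau0] tau bb_bs])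
lemma cad_brc: "cadlag_M_up brc"
  unfolding brc_def by (rule cadlag_M_up_min[OF Sc(4) tau0])
lemma cad_bmin: "cadlag_M_up (\<lambda>t. \<beta> (min t \<tau>))" by (rule cadlag_M_up_min[OF Sc(2) tau0])
lemma cad_bsmin: "cadlag_M_up (\<lambda>t. \<beta>s (min t \<tau>))" by (rule cadlag_M_up_min[OF Sc(3) tau0])

lemma fin_xic: "t \<ge> 0 \<Longrightarrow> fin_meas (xic t)"
  unfolding xic_def using fin_xi[of "min t \<tau>"] tau by (intro rcut_fin) simp
lemma fin_bc: "t \<ge> 0 \<Longrightarrow> fin_meas (bc t)"
  unfolding bc_def using fin_b[of "min t \<tau>"] tau by (intro rcut_fin) simp
lemma fin_bsc: "t \<ge> 0 \<Longrightarrow> fin_meas (bsc t)"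
  unfolding bsc_def using fin_bs[of "min t \<tau>"] tau by (intro rcut_fin) simp
lemma fin_brc: "t \<ge> 0 \<Longrightarrow> fin_meas (brc t)"
  unfolding brc_def using fin_br[of "min t \<tau>"] tau by simp

lemma Iic_Icc: "{..\<tau>} \<inter> {0..x} = {0..min x \<tau>}" by auto

lemma xic_meas: "t \<ge> 0 \<Longrightarrow> measure (xic t) {0..x} = measure (\<xi> (min t \<tau>)) {0..min x \<tau>}"
  unfolding xic_def using fin_xi[of "min t \<tau>"] tau by (subst rcut_measure) (auto simp: Iic_Icc min.commute)
lemma bc_meas: "t \<ge> 0 \<Longrightarrow> measure (bc t) {0..x} = measure (\<beta> (min t \<tau>)) {0..min x \<tau>}"
  unfolding bc_def using fin_b[of "min t \<tau>"] tau by (subst rcut_measure) (auto simp: Iic_Icc min.commute)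
lemma bsc_meas: "t \<ge> 0 \<Longrightarrow> measure (bsc t) {0..x} = measure (\<beta>s (min t \<tau>)) {0..min x \<tau>}"
  unfolding bsc_def using fin_bs[of "min t \<tau>"] tau by (subst rcut_measure) (auto simp: Iic_Icc min.commute)

lemma xi_tau_atom: "emeasure (\<xi> \<tau>) {\<tau>} = 0"
proof (rule atom_zero_pt[OF fin_xi[OF tau0] fin_al[OF tau0] al_atom[OF tau0] tau])
  fix d assume d: "0 < d" "d < \<tau>"
  show "measure (\<xi> \<tau>) {\<tau> - d<..\<tau> + d} \<le> measure (\<alpha> \<tau>) {\<tau> - d<..\<tau> + d}"
    by (rule xi_le_al) (use d in auto)
qed

lemma xi_tau_zero_e: "emeasure (\<xi> \<tau>) {0..\<tau>} = 0"
proof -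
  have u: "{0..\<tau>} = {0..<\<tau>} \<union> {\<tau>}" using tau by auto
  have "emeasure (\<xi> \<tau>) {0..\<tau>} \<le> emeasure (\<xi> \<tau>) {0..<\<tau>} + emeasure (\<xi> \<tau>) {\<tau>}"
    unfolding u by (rule emeasure_subadditive) (use fin_xi[OF tau0] in \<open>auto simp: fin_meas_sets\<close>)
  then show ?thesis using Sxi0[OF tau0] xi_tau_atom by simp
qed

lemma xi_tau_zero: "y \<le> \<tau> \<Longrightarrow> measure (\<xi> \<tau>) {0..y} = 0"
proof -
  assume y: "y \<le> \<tau>"
  have "emeasure (\<xi> \<tau>) {0..y} \<le> emeasure (\<xi> \<tau>) {0..\<tau>}"
    by (rule emeasure_mono) (use y fin_xi[OF tau0] in \<open>auto simp: fin_meas_sets\<close>)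
  then show ?thesis using xi_tau_zero_e by (simp add: measure_def)
qed

lemma xic_late: "t \<ge> \<tau> \<Longrightarrow> measure (xic t) {0..x} = 0"
  using xic_meas[of t x] xi_tau_zero[of "min x \<tau>"] tau by simp

lemma br_cut: "0 \<le> s \<Longrightarrow> s \<le> \<tau> \<Longrightarrow> B \<in> sets borel \<Longrightarrow> emeasure (\<beta>r s) ({..\<tau>} \<inter> B) = emeasure (\<beta>r s) B"
proof -
  assume s: "0 \<le> s" "s \<le> \<tau>" and B: "B \<in> sets borel"
  have sb: "sets (\<beta>r s) = sets borel" using fin_br[OF s(1)] by (simp add: fin_meas_sets)
  have sub: "{\<tau><..} \<inter> B \<subseteq> {s<..}" using s by auto
  have "emeasure (\<beta>r s) ({\<tau><..} \<inter> B) \<le> emeasure (\<beta>r s) {s<..}"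
    by (rule emeasure_mono[OF sub]) (simp add: sb)
  then have z: "emeasure (\<beta>r s) ({\<tau><..} \<inter> B) = 0" using Sbr[OF s(1)] by simp
  have eq: "B = ({..\<tau>} \<inter> B) \<union> ({\<tau><..} \<inter> B)" by auto
  have m1: "{..\<tau>} \<inter> B \<in> sets (\<beta>r s)" using B sb by simp
  have m2: "{\<tau><..} \<inter> B \<in> sets (\<beta>r s)" using B sb by simp
  have dj: "({..\<tau>} \<inter> B) \<inter> ({\<tau><..} \<inter> B) = {}" by auto
  have "emeasure (\<beta>r s) B = emeasure (\<beta>r s) ({..\<tau>} \<inter> B) + emeasure (\<beta>r s) ({\<tau><..} \<inter> B)"
    using plus_emeasure[OF m1 m2 dj] eq by simp
  then show ?thesis using z by simp
qed

lemma C7: "t \<ge> 0 \<Longrightarrow> B \<in> sets borel \<Longrightarrow> emeasure (bc t) B = emeasure (bsc t) B + emeasure (brc t) B"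
proof -
  assume t: "t \<ge> 0" and B: "B \<in> sets borel"
  let ?s = "min t \<tau>"
  have s: "0 \<le> ?s" "?s \<le> \<tau>" using t tau by auto
  have "emeasure (bc t) B = emeasure (\<beta> ?s) ({..\<tau>} \<inter> B)"
    unfolding bc_def by (rule rcut_emeasure[OF fin_b[OF s(1)] B])
  also have "\<dots> = emeasure (\<beta>s ?s) ({..\<tau>} \<inter> B) + emeasure (\<beta>r ?s) ({..\<tau>} \<inter> B)"
    by (rule Sadd) (use s B in auto)
  also have "emeasure (\<beta>s ?s) ({..\<tau>} \<inter> B) = emeasure (bsc t) B"
    unfolding bsc_def by (rule rcut_emeasure[OF fin_bs[OF s(1)] B, symmetric])
  also have "emeasure (\<beta>r ?s) ({..\<tau>} \<inter> B) = emeasure (brc t) B"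
    unfolding brc_def by (rule br_cut[OF s B])
  finally show ?thesis .
qed

lemma C9: "t \<ge> 0 \<Longrightarrow> emeasure (brc t) {t<..} = 0"
proof -
  assume t: "t \<ge> 0"
  have "emeasure (\<beta>r (min t \<tau>)) {t<..} \<le> emeasure (\<beta>r (min t \<tau>)) {min t \<tau><..}"
    by (rule emeasure_mono) (use fin_br[of "min t \<tau>"] t tau in \<open>auto simp: fin_meas_sets\<close>)
  then show ?thesis unfolding brc_def using Sbr[of "min t \<tau>"] t tau by simp
qed

lemma trunc_meas: "t \<ge> 0 \<Longrightarrow> measure (truncate_data \<alpha> \<tau> t) {0..x} = measure (\<alpha> t) {0..min x \<tau>}"
proof -
  assume t: "t \<ge> 0"
  have "emeasure (truncate_data \<alpha> \<tau> t) {0..x} = emeasure (\<alpha> t) ({0..\<tau>} \<inter> {0..x})"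
    unfolding truncate_data_def by (rule emeasure_restricted) (use asets t in auto)
  also have "{0..\<tau>} \<inter> {0..x} = {0..min x \<tau>}" by auto
  finally show ?thesis by (simp add: measure_def)
qed

lemma C10: "t \<ge> 0 \<Longrightarrow> x \<ge> 0 \<Longrightarrow>
  measure (xic t) {0..x} = measure (truncate_data \<alpha> \<tau> t) {0..x} - measure (bc t) {0..x}"
proof -
  assume t: "t \<ge> 0" and x: "x \<ge> 0"
  let ?s = "min t \<tau>" and ?y = "min x \<tau>"
  have al: "measure (\<alpha> t) {0..?y} = measure (\<alpha> ?s) {0..?y}"
  proof (cases "t \<le> \<tau>")
    case True then show ?thesis by simp
  next
    case False then show ?thesis using al_freeze[of ?y t] x tau by simp
  qed
  show ?thesis unfolding xic_meas[OF t] bc_meas[OF t] trunc_meas[OF t] al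
    by (rule Sxi) (use t x tau in auto)
qed

lemma C13: "t \<ge> 0 \<Longrightarrow> rhoc t = measure (brc t) {0..t} \<and> rhoc t = measure (brc t) {0..}"
proof -
  assume t: "t \<ge> 0"
  let ?s = "min t \<tau>"
  have s: "?s \<ge> 0" using t tau by simp
  have a: "measure (\<beta>r ?s) {0..?s} \<le> measure (\<beta>r ?s) {0..t}"
    by (rule fin_meas_mono[OF fin_br[OF s]]) auto
  have b: "measure (\<beta>r ?s) {0..t} \<le> measure (\<beta>r ?s) {0..}"
    by (rule fin_meas_mono[OF fin_br[OF s]]) auto
  show ?thesis unfolding rhoc_def brc_def using Srho[OF s] a b by linarith
qed

lemma C14: "t \<ge> 0 \<Longrightarrow> emeasure (xic t) {0..<t} = 0"
proof -
  assume t: "t \<ge> 0"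
  let ?s = "min t \<tau>"
  have s: "?s \<ge> 0" using t tau by simp
  have e: "emeasure (xic t) {0..<t} = emeasure (\<xi> ?s) ({..\<tau>} \<inter> {0..<t})"
    unfolding xic_def by (rule rcut_emeasure[OF fin_xi[OF s]]) simp
  show ?thesis
  proof (cases "t \<le> \<tau>")
    case True
    have m: "min t \<tau> = t" using True by simp
    have "emeasure (\<xi> t) ({..\<tau>} \<inter> {0..<t}) \<le> emeasure (\<xi> t) {0..<t}"
      by (rule emeasure_mono) (use fin_xi[OF t] in \<open>auto simp: fin_meas_sets\<close>)
    then show ?thesis using e Sxi0[OF t] m by simp
  next
    case False
    have m: "min t \<tau> = \<tau>" using False by simp
    have "emeasure (\<xi> \<tau>) ({..\<tau>} \<inter> {0..<t}) \<le> emeasure (\<xi> \<tau>) {0..\<tau>}"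
      by (rule emeasure_mono) (use fin_xi[OF tau0] in \<open>auto simp: fin_meas_sets\<close>)
    then show ?thesis using e xi_tau_zero_e m by simp
  qed
qed

end


lemma nnc_mono: "nonneg_nondec_cadlag f \<Longrightarrow> x \<le> y \<Longrightarrow> ext0 f x \<le> ext0 f y"
  unfolding nonneg_nondec_cadlag_def using ext0_mono[of f] by auto
lemma nnc_rc: "nonneg_nondec_cadlag f \<Longrightarrow> continuous (at_right a) (ext0 f)"
  unfolding nonneg_nondec_cadlag_def cadlag_fun_def by (intro ext0_rc) auto

lemma small_nbhd:
  assumes L: "fin_meas L" "emeasure L {c} = 0" and e: "e > 0"
  shows "\<exists>d>0. measure L {c-d<..c+d} < e"
proof -
  let ?A = "\<lambda>n::nat. {c - 1 / (real n + 2)<..c + 1 / (real n + 2)}"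
  have "(\<lambda>n. measure L (?A n)) \<longlonglongrightarrow> measure L (\<Inter>n. ?A n)"
    by (rule finite_measure.finite_Lim_measure_decseq[OF fin_meas_finite[OF L(1)]])
       (use shrink_Inter[of 1 c] L(1) in \<open>auto simp: fin_meas_sets\<close>)
  then have lim: "(\<lambda>n. measure L (?A n)) \<longlonglongrightarrow> 0"
    using shrink_Inter(1)[of 1 c] L(2) by (simp add: measure_def)
  then have "\<forall>\<^sub>F n in sequentially. measure L (?A n) < e"
    using e by (rule order_tendstoD)
  then obtain n where n: "measure L (?A n) < e" by (auto simp: eventually_sequentially)
  show ?thesis by (rule exI[of _ "1 / (real n + 2)"]) (use n in simp)
qed

lemma meas_UNIV_nonneg:
  assumes M: "fin_meas M" shows "measure M {0..} = measure M UNIV"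
proof -
  have u: "UNIV = {..<0} \<union> {0::real..}" by auto
  have "measure M {..<0} = 0" using fin_meas_neg[OF M] by (simp add: measure_def)
  then show ?thesis by (subst u, subst fin_meas_union[OF M]) auto
qed

lemma up_mono_tot:
  assumes up: "cadlag_M_up \<zeta>" and st: "0 \<le> s" "s \<le> t"
  shows "measure (\<zeta> s) UNIV \<le> measure (\<zeta> t) UNIV"
proof -
  have "measure (\<zeta> s) {..0} + measure (\<zeta> s) {0<..} \<le> measure (\<zeta> t) {..0} + measure (\<zeta> t) {0<..}"
    using up_mono_meas[OF up st, of 0] by simp
  moreover have "fin_meas (\<zeta> s)" "fin_meas (\<zeta> t)" using up st unfolding cadlag_M_up_def cadlag_M_def by auto
  ultimately show ?thesis using fin_meas_compl_Ioi[of "\<zeta> s" 0] fin_meas_compl_Ioi[of "\<zeta> t" 0] by simp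
qed

context edfs begin

lemma rhoc_fun: "rhoc = (\<lambda>t. \<rho> (min t \<tau>))" by (rule ext) (simp add: rhoc_def)

lemma nnc_rhoc: "nonneg_nondec_cadlag rhoc"
proof -
  have r: "cadlag_fun \<rho>" "mono_on {0..} \<rho>" "\<And>t. t \<ge> 0 \<Longrightarrow> \<rho> t \<ge> 0"
    using Sc(5) unfolding nonneg_nondec_cadlag_def by auto
  have "cadlag_fun rhoc" unfolding rhoc_fun by (rule cadlag_fun_min[OF r(1) tau0])
  moreover have "mono_on {0..} rhoc"
  proof (rule mono_onI)
    fix s t :: real assume "s \<in> {0..}" "t \<in> {0..}" "s \<le> t"
    then show "rhoc s \<le> rhoc t" unfolding rhoc_def using tau by (intro mono_onD[OF r(2)]) auto
  qed
  moreover have "rhoc t \<ge> 0" if "t \<ge> 0" for t unfolding rhoc_def using r(3) that tau by simp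
  ultimately show ?thesis unfolding nonneg_nondec_cadlag_def by blast
qed

lemma bsc_tot: "t \<ge> 0 \<Longrightarrow> measure (bsc t) UNIV = measure (\<beta>s (min t \<tau>)) {..\<tau>}"
  unfolding bsc_def using fin_bs[of "min t \<tau>"] tau by (subst rcut_measure) auto

lemma iotac_eq: "t \<ge> 0 \<Longrightarrow> iotac t = \<iota> t + measure (\<beta>s t) UNIV - measure (\<beta>s (min t \<tau>)) {..\<tau>}"
proof -
  assume t: "t \<ge> 0"
  have "iotac t = \<mu> t - measure (bsc t) UNIV"
    unfolding iotac_def using meas_UNIV_nonneg[OF fin_bsc[OF t]] by simp
  then show ?thesis using Siota[OF t] meas_UNIV_nonneg[OF fin_bs[OF t]] bsc_tot[OF t] by simp
qed

lemma iotac_early: "0 \<le> t \<Longrightarrow> t \<le> \<tau> \<Longrightarrow> iotac t = \<iota> t + measure (\<beta>s t) {\<tau><..}"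
  using iotac_eq[of t] fin_meas_compl_Ioi[OF fin_bs[of t], of \<tau>] by simp

lemma iotac_late: "\<tau> \<le> t \<Longrightarrow> iotac t = \<iota> t + measure (\<beta>s t) UNIV - measure (\<beta>s \<tau>) {..\<tau>}"
  using iotac_eq[of t] tau by simp

lemma nnc_iotac: "nonneg_nondec_cadlag iotac"
proof -
  have i: "cadlag_fun \<iota>" "mono_on {0..} \<iota>" "\<And>t. t \<ge> 0 \<Longrightarrow> \<iota> t \<ge> 0"
    using Sc(6) unfolding nonneg_nondec_cadlag_def by auto
  have bs0: "cadlag_M \<beta>s" using Sc(3) unfolding cadlag_M_up_def by blast
  have bsc0: "cadlag_M bsc" using cad_bsc unfolding cadlag_M_up_def by blast
  have cf: "cadlag_fun (\<lambda>t. \<iota> t + measure (\<beta>s t) UNIV - measure (bsc t) UNIV)"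
    by (rule cadlag_fun_diff[OF cadlag_fun_add[OF i(1) tot_cadlag[OF bs0]] tot_cadlag[OF bsc0]])
  have "cadlag_fun iotac"
  proof (rule cadlag_fun_cong[OF cf])
    fix t :: real assume t: "t \<ge> 0"
    show "\<iota> t + measure (\<beta>s t) UNIV - measure (bsc t) UNIV = iotac t"
      using iotac_eq[OF t] bsc_tot[OF t] by simp
  qed
  moreover have mono_early: "iotac s \<le> iotac t" if st: "0 \<le> s" "s \<le> t" "t \<le> \<tau>" for s t
  proof -
    have "\<iota> s \<le> \<iota> t" using st by (intro mono_onD[OF i(2)]) auto
    moreover have "measure (\<beta>s s) {\<tau><..} \<le> measure (\<beta>s t) {\<tau><..}" using up_mono_meas(2)[OF Sc(3) st(1,2)] .
    ultimately show ?thesis using iotac_early[of s] iotac_early[of t] st by simp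
  qed
  moreover have mono_late: "iotac s \<le> iotac t" if st: "\<tau> \<le> s" "s \<le> t" for s t
  proof -
    have s0: "0 \<le> s" using st tau by simp
    have "\<iota> s \<le> \<iota> t" using st s0 by (intro mono_onD[OF i(2)]) auto
    moreover have "measure (\<beta>s s) UNIV \<le> measure (\<beta>s t) UNIV" using up_mono_tot[OF Sc(3) s0 st(2)] .
    ultimately show ?thesis using iotac_late[of s] iotac_late[of t] st by simp
  qed
  moreover have "mono_on {0..} iotac"
  proof (rule mono_onI)
    fix s t :: real assume st: "s \<in> {0..}" "t \<in> {0..}" "s \<le> t"
    show "iotac s \<le> iotac t"
    proof (cases "t \<le> \<tau>")
      case True then show ?thesis using mono_early st by auto
    next
      case False
      show ?thesis
      proof (cases "\<tau> \<le> s")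
        case True then show ?thesis using mono_late st by auto
      next
        case False
        have "iotac s \<le> iotac \<tau>" using mono_early[of s \<tau>] st False by auto
        also have "\<dots> \<le> iotac t" using mono_late[of \<tau> t] \<open>\<not> t \<le> \<tau>\<close> by auto
        finally show ?thesis .
      qed
    qed
  qed
  moreover have "iotac t \<ge> 0" if t: "t \<ge> 0" for t
  proof -
    have "measure (\<beta>s (min t \<tau>)) {..\<tau>} \<le> measure (\<beta>s t) {..\<tau>}"
      using up_mono_meas(1)[OF Sc(3), of "min t \<tau>" t \<tau>] t tau by simp
    moreover have "measure (\<beta>s t) {..\<tau>} \<le> measure (\<beta>s t) UNIV" by (rule fin_meas_mono[OF fin_bs[OF t]]) auto
    ultimately show ?thesis using iotac_eq[OF t] i(3)[OF t] by simp
  qed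
  ultimately show ?thesis unfolding nonneg_nondec_cadlag_def by blast
qed

end

context edfs begin

lemma rho_jump_bound:
  assumes y: "0 \<le> y" "y < t" "t < \<tau>"
  shows "\<rho> \<tau> - \<rho> t \<le> measure (\<alpha> \<tau>) {0..\<tau>} - measure (\<alpha> y) {0..y}"
proof -
  have t0: "t \<ge> 0" using y by simp
  have r1: "\<rho> \<tau> = measure (\<beta>r \<tau>) {0..\<tau>}" using Srho(1)[OF tau0] .
  have r2: "measure (\<beta>r t) {0..\<tau>} \<le> \<rho> t"
    using Srho(2)[OF t0] fin_meas_mono[OF fin_br[OF t0], of "{0..\<tau>}" "{0..}"] by simp
  have s1: "measure (\<beta> \<tau>) {0..\<tau>} = measure (\<beta>s \<tau>) {0..\<tau>} + measure (\<beta>r \<tau>) {0..\<tau>}"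
    using b_split[OF tau0] by simp
  have s2: "measure (\<beta> t) {0..\<tau>} = measure (\<beta>s t) {0..\<tau>} + measure (\<beta>r t) {0..\<tau>}"
    using b_split[OF t0] by simp
  have bs: "measure (\<beta>s t) {0..\<tau>} \<le> measure (\<beta>s \<tau>) {0..\<tau>}"
    using up_mono_meas(1)[OF Sc(3) t0, of \<tau> \<tau>] y meas_Iic[OF fin_bs[OF t0], of \<tau>] meas_Iic[OF fin_bs[OF tau0], of \<tau>] tau
    by simp
  have b1: "measure (\<beta> \<tau>) {0..\<tau>} \<le> measure (\<alpha> \<tau>) {0..\<tau>}"
    using Sxi[OF tau0 tau0] measure_nonneg[of "\<xi> \<tau>" "{0..\<tau>}"] by simp
  have b2: "measure (\<beta> t) {0..y} \<le> measure (\<beta> t) {0..\<tau>}"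
    by (rule fin_meas_mono[OF fin_b[OF t0]]) (use y in auto)
  have xz: "measure (\<xi> t) {0..y} = 0"
  proof -
    have "emeasure (\<xi> t) {0..y} \<le> emeasure (\<xi> t) {0..<t}"
      by (rule emeasure_mono) (use y fin_xi[OF t0] in \<open>auto simp: fin_meas_sets\<close>)
    then show ?thesis using Sxi0[OF t0] by (simp add: measure_def)
  qed
  have b3: "measure (\<beta> t) {0..y} = measure (\<alpha> t) {0..y}" using Sxi[OF t0 y(1)] xz by simp
  have a1: "measure (\<alpha> y) {0..y} \<le> measure (\<alpha> t) {0..y}" by (rule al_mono) (use y in auto)
  show ?thesis using r1 r2 s1 s2 bs b1 b2 b3 a1 by linarith
qed

lemma al_gap_small:
  assumes e: "e > 0"
  shows "\<exists>y. 0 \<le> y \<and> y < \<tau> \<and> measure (\<alpha> \<tau>) {0..\<tau>} - measure (\<alpha> y) {0..y} < e"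
proof -
  have e2: "e / 2 > 0" using e by simp
  obtain d where d: "d > 0" "measure (\<alpha> \<tau>) {\<tau>-d<..\<tau>+d} < e / 2"
    using small_nbhd[OF fin_al[OF tau0] al_atom[OF tau0] e2] by blast
  have wt: "weak_tendsto \<alpha>h (\<alpha>h \<tau>) (at \<tau> within {0..})"
    using ah tau0 unfolding cont_M_atomless_up_def by blast
  have evf: "\<forall>\<^sub>F s in at \<tau> within {0..}. fin_meas (\<alpha>h s)"
    unfolding eventually_at by (rule exI[of _ 1]) (auto intro: fin_ah)
  have lim: "((\<lambda>s. measure (\<alpha>h s) UNIV) \<longlongrightarrow> measure (\<alpha>h \<tau>) UNIV) (at \<tau> within {0..})"
    by (rule weak_tot[OF wt evf fin_ah[OF tau0]])
  have "\<forall>\<^sub>F s in at \<tau> within {0..}. dist (measure (\<alpha>h s) UNIV) (measure (\<alpha>h \<tau>) UNIV) < e / 2"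
    by (rule tendstoD[OF lim e2])
  then obtain d1 where d1: "d1 > 0"
    "\<And>s. s \<in> {0..} \<Longrightarrow> s \<noteq> \<tau> \<Longrightarrow> dist s \<tau> < d1 \<Longrightarrow> dist (measure (\<alpha>h s) UNIV) (measure (\<alpha>h \<tau>) UNIV) < e / 2"
    unfolding eventually_at by blast
  define y where "y = max 0 (\<tau> - min d (d1 / 2))"
  have m: "min d (d1 / 2) > 0" using d d1 by simp
  have y: "0 \<le> y" "y < \<tau>" "\<tau> - d \<le> y" "dist y \<tau> < d1"
    using m tau d1(1) unfolding y_def dist_real_def by (auto simp: abs_if)
  have "dist (measure (\<alpha>h y) UNIV) (measure (\<alpha>h \<tau>) UNIV) < e / 2"
    using d1(2)[of y] y by simp
  then have tot: "measure (\<alpha>h \<tau>) UNIV - measure (\<alpha>h y) UNIV < e / 2"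
    unfolding dist_real_def by linarith
  have hu: "measure (\<alpha>h y) {y<..} \<le> measure (\<alpha>h \<tau>) {y<..}"
    using up_mono_meas(2)[OF ah_up y(1), of \<tau> y] y by simp
  have c1: "measure (\<alpha>h \<tau>) {0..y} - measure (\<alpha>h y) {0..y} \<le> measure (\<alpha>h \<tau>) UNIV - measure (\<alpha>h y) UNIV"
    using hu fin_meas_compl_Ioi[OF fin_ah[OF tau0], of y] fin_meas_compl_Ioi[OF fin_ah[OF y(1)], of y]
      meas_Iic[OF fin_ah[OF tau0] y(1)] meas_Iic[OF fin_ah[OF y(1)] y(1)] by simp
  have c2: "measure (\<alpha> \<tau>) {0..y} - measure (\<alpha> y) {0..y} = measure (\<alpha>h \<tau>) {0..y} - measure (\<alpha>h y) {0..y}"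
    using al_meas[OF tau0, of "{0..y}"] al_meas[OF y(1), of "{0..y}"] by simp
  have c3: "measure (\<alpha> \<tau>) {0..\<tau>} = measure (\<alpha> \<tau>) {0..y} + measure (\<alpha> \<tau>) {y<..\<tau>}"
    using meas_Ioc[OF fin_al[OF tau0] y(1), of \<tau>] y by simp
  have c4: "measure (\<alpha> \<tau>) {y<..\<tau>} \<le> measure (\<alpha> \<tau>) {\<tau>-d<..\<tau>+d}"
    by (rule fin_meas_mono[OF fin_al[OF tau0]]) (use y d in auto)
  show ?thesis using c1 c2 c3 c4 d(2) tot y(1,2) by (intro exI[of _ y]) linarith
qed

lemma rho_atom: "emeasure (stieltjes \<rho>) {\<tau>} = 0"
proof -
  have mono: "\<And>x y. x \<le> y \<Longrightarrow> ext0 \<rho> x \<le> ext0 \<rho> y" by (rule nnc_mono[OF Sc(5)])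
  have rc: "\<And>a. continuous (at_right a) (ext0 \<rho>)" by (rule nnc_rc[OF Sc(5)])
  have key: "emeasure (stieltjes \<rho>) {\<tau>} \<le> 0 + ennreal e" if e: "e > 0" for e
  proof -
    obtain y where y: "0 \<le> y" "y < \<tau>" "measure (\<alpha> \<tau>) {0..\<tau>} - measure (\<alpha> y) {0..y} < e"
      using al_gap_small[OF e] by blast
    define t where "t = (y + \<tau>) / 2"
    have t: "y < t" "t < \<tau>" "0 \<le> t" using y unfolding t_def by auto
    have sub: "{\<tau>} \<subseteq> {t<..\<tau>}" using t by simp
    have "emeasure (stieltjes \<rho>) {\<tau>} \<le> emeasure (stieltjes \<rho>) {t<..\<tau>}"
      by (rule emeasure_mono[OF sub]) (simp add: stieltjes_def)
    also have "\<dots> = ennreal (ext0 \<rho> \<tau> - ext0 \<rho> t)"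
      unfolding stieltjes_ext0 by (rule emeasure_interval_measure_Ioc[OF _ mono rc]) (use t in simp)
    also have "ennreal (ext0 \<rho> \<tau> - ext0 \<rho> t) \<le> ennreal e"
    proof -
      have "ext0 \<rho> \<tau> - ext0 \<rho> t = \<rho> \<tau> - \<rho> t" using t tau by (simp add: ext0_def)
      then show ?thesis using rho_jump_bound[OF y(1) t(1) t(2)] y(3) by (intro ennreal_leI) linarith
    qed
    finally show ?thesis by simp
  qed
  have "emeasure (stieltjes \<rho>) {\<tau>} \<le> 0"
  proof (rule ennreal_le_epsilon)
    fix e :: real assume "0 < e"
    then show "emeasure (stieltjes \<rho>) {\<tau>} \<le> 0 + ennreal e" by (rule key)
  qed
  then show ?thesis by (simp only: le_zero_eq)
qed

end


lemma meas_diff_mono: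
  fixes p q h :: "real \<Rightarrow> real"
  assumes mp: "mono_on {0..} p" and mq: "mono_on {0..} q" and h: "\<And>t. t \<ge> 0 \<Longrightarrow> h t = p t - q t"
  shows "(\<lambda>t. ennreal (h t) * indicator {0..} t) \<in> borel_measurable borel"
proof -
  define p' where "p' t = p (max t 0)" for t
  define q' where "q' t = q (max t 0)" for t
  have "mono p'" unfolding p'_def by (rule monoI, rule mono_onD[OF mp]) auto
  then have mp': "p' \<in> borel_measurable borel" by (rule borel_measurable_mono)
  have "mono q'" unfolding q'_def by (rule monoI, rule mono_onD[OF mq]) auto
  then have mq': "q' \<in> borel_measurable borel" by (rule borel_measurable_mono)
  have m: "(\<lambda>t. ennreal (p' t - q' t) * indicator {0..} t) \<in> borel_measurable borel"
    using mp' mq' by measurable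
  have "(\<lambda>t. ennreal (h t) * indicator {0..} t) = (\<lambda>t. ennreal (p' t - q' t) * indicator {0..} t)"
  proof (rule ext)
    fix t :: real
    show "ennreal (h t) * indicator {0..} t = ennreal (p' t - q' t) * indicator {0..} t"
      by (cases "t \<ge> 0") (simp_all add: h p'_def q'_def)
  qed
  then show ?thesis using m by simp
qed

lemma null_cover:
  fixes h :: "real \<Rightarrow> real"
  assumes I: "(\<integral>\<^sup>+ t\<in>{0..}. ennreal (h t) \<partial>M) = 0" and sM: "sets M = sets borel"
    and hm: "(\<lambda>t. ennreal (h t) * indicator {0..} t) \<in> borel_measurable borel"
  obtains N where "N \<in> sets borel" "emeasure M N = 0" "\<And>t. t \<ge> 0 \<Longrightarrow> h t > 0 \<Longrightarrow> t \<in> N"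
proof -
  have hm': "(\<lambda>t. ennreal (h t) * indicator {0..} t) \<in> borel_measurable M"
    by (subst measurable_cong_sets[OF sM refl]) (rule hm)
  have "AE t in M. ennreal (h t) * indicator {0..} t = 0"
    using I nn_integral_0_iff_AE[OF hm'] by simp
  then obtain N where N: "{t \<in> space M. \<not> ennreal (h t) * indicator {0..} t = 0} \<subseteq> N" "emeasure M N = 0" "N \<in> sets M"
    by (rule AE_E)
  have sp: "space M = UNIV" using sets_eq_imp_space_eq[OF sM] by simp
  show ?thesis
  proof (rule that)
    show "N \<in> sets borel" using N(3) sM by simp
    show "emeasure M N = 0" by (rule N(2))
    fix t :: real assume "t \<ge> 0" "h t > 0"
    then have "t \<in> {t \<in> space M. \<not> ennreal (h t) * indicator {0..} t = 0}" using sp by simp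
    then show "t \<in> N" using N(1) by blast
  qed
qed

lemma up_open_mono:
  assumes up: "cadlag_M_up \<zeta>"
  shows "\<And>x y. x \<le> y \<Longrightarrow> ext0 (\<lambda>s. measure (\<zeta> s) {c<..}) x \<le> ext0 (\<lambda>s. measure (\<zeta> s) {c<..}) y"
proof -
  have "mono_on {0..} (\<lambda>s. measure (\<zeta> s) {c<..})"
    by (rule mono_onI) (use up_mono_meas(2)[OF up] in auto)
  then show "\<And>x y. x \<le> y \<Longrightarrow> ext0 (\<lambda>s. measure (\<zeta> s) {c<..}) x \<le> ext0 (\<lambda>s. measure (\<zeta> s) {c<..}) y"
    using ext0_mono[of "\<lambda>s. measure (\<zeta> s) {c<..}"] by simp
qed

lemma up_open_rc:
  assumes up: "cadlag_M_up \<zeta>"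
  shows "\<And>a. continuous (at_right a) (ext0 (\<lambda>s. measure (\<zeta> s) {c<..}))"
  by (rule ext0_rc) (rule rc_open[OF up])

lemma ext0_add: "ext0 f x + ext0 g x = ext0 (\<lambda>s. f s + g s) x"
  by (simp add: ext0_def)

lemma supp_rcut:
  assumes M: "fin_meas M" and z: "z \<in> supp_meas M" "z < c"
  shows "z \<in> supp_meas (rcut c M)"
  unfolding supp_meas_def
proof (intro CollectI allI impI)
  fix e :: real assume e: "e > 0"
  define e' where "e' = min e (c - z)"
  have e': "e' > 0" using e z by (simp add: e'_def)
  have ne: "emeasure M {z - e'<..<z + e'} \<noteq> 0" using z(1) e' unfolding supp_meas_def by blast
  have sub: "{z - e'<..<z + e'} \<subseteq> {..c} \<inter> {z - e<..<z + e}" unfolding e'_def by auto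
  have "emeasure M {z - e'<..<z + e'} \<le> emeasure M ({..c} \<inter> {z - e<..<z + e})"
    by (rule emeasure_mono[OF sub]) (simp add: fin_meas_sets[OF M])
  also have "\<dots> = emeasure (rcut c M) {z - e<..<z + e}" by (rule rcut_emeasure[OF M, symmetric]) simp
  finally show "emeasure (rcut c M) {z - e<..<z + e} \<noteq> 0" using ne by auto
qed

lemma inf_supp_rcut:
  assumes M: "fin_meas M" and lt: "inf_supp M < ereal c"
  shows "inf_supp (rcut c M) \<le> inf_supp M"
  unfolding inf_supp_def
proof (rule Inf_mono)
  fix b assume "b \<in> ereal ` supp_meas M"
  then obtain z where zb: "b = ereal z" and z: "z \<in> supp_meas M" by blast
  show "\<exists>a\<in>ereal ` supp_meas (rcut c M). a \<le> b"
  proof (cases "z < c")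
    case True
    then show ?thesis using supp_rcut[OF M z True] zb by blast
  next
    case False
    obtain w where w: "w \<in> ereal ` supp_meas M" "w < ereal c"
      using lt unfolding inf_supp_def Inf_less_iff by blast
    then obtain z' where z': "w = ereal z'" "z' \<in> supp_meas M" by blast
    have "z' < c" using w(2) z'(1) by simp
    then have "ereal z' \<in> ereal ` supp_meas (rcut c M)" using supp_rcut[OF M z'(2)] by blast
    moreover have "ereal z' \<le> b" using \<open>z' < c\<close> False zb by simp
    ultimately show ?thesis by blast
  qed
qed


lemma sets_stieltjes: "sets (stieltjes f) = sets borel" by (simp add: stieltjes_def)

context edfs begin

lemma xi_meas_fun:
  assumes y: "y \<ge> 0"
  shows "(\<lambda>t. ennreal (measure (\<xi> t) {0..y}) * indicator {0..} t) \<in> borel_measurable borel"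
proof (rule meas_diff_mono[where p="\<lambda>t. measure (\<alpha> t) {0..y}" and q="\<lambda>t. measure (\<beta> t) {0..y}"])
  show "mono_on {0..} (\<lambda>t. measure (\<alpha> t) {0..y})"
    by (rule mono_onI) (use al_mono in auto)
  show "mono_on {0..} (\<lambda>t. measure (\<beta> t) {0..y})"
  proof (rule mono_onI)
    fix s t :: real assume st: "s \<in> {0..}" "t \<in> {0..}" "s \<le> t"
    then show "measure (\<beta> s) {0..y} \<le> measure (\<beta> t) {0..y}"
      using up_mono_meas(1)[OF Sc(2), of s t y] meas_Iic[OF fin_b[of s] y] meas_Iic[OF fin_b[of t] y] by simp
  qed
  show "\<And>t. t \<ge> 0 \<Longrightarrow> measure (\<xi> t) {0..y} = measure (\<alpha> t) {0..y} - measure (\<beta> t) {0..y}"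
    using Sxi y by blast
qed

lemma ext0_iota_mono: "\<And>x y. x \<le> y \<Longrightarrow> ext0 \<iota> x \<le> ext0 \<iota> y" by (rule nnc_mono[OF Sc(6)])
lemma ext0_iota_rc: "\<And>a. continuous (at_right a) (ext0 \<iota>)" by (rule nnc_rc[OF Sc(6)])
lemma ext0_iotac_mono: "\<And>x y. x \<le> y \<Longrightarrow> ext0 iotac x \<le> ext0 iotac y" by (rule nnc_mono[OF nnc_iotac])
lemma ext0_iotac_rc: "\<And>a. continuous (at_right a) (ext0 iotac)" by (rule nnc_rc[OF nnc_iotac])

lemma br_above_tau: "0 \<le> s \<Longrightarrow> s \<le> \<tau> \<Longrightarrow> measure (\<beta>r s) {\<tau><..} = 0"
proof -
  assume s: "0 \<le> s" "s \<le> \<tau>"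
  have "emeasure (\<beta>r s) {\<tau><..} \<le> emeasure (\<beta>r s) {s<..}"
    by (rule emeasure_mono) (use s fin_br[OF s(1)] in \<open>auto simp: fin_meas_sets\<close>)
  then show ?thesis using Sbr[OF s(1)] by (simp add: measure_def)
qed

lemma C11:
  assumes x: "x \<ge> 0"
  shows "(\<integral>\<^sup>+ t\<in>{0..}. ennreal (measure (xic t) {0..x}) \<partial>stieltjes iotac) = 0"
proof -
  let ?y = "min x \<tau>"
  have y: "?y \<ge> 0" "?y \<le> \<tau>" using x tau by auto
  obtain N1 where N1: "N1 \<in> sets borel" "emeasure (stieltjes \<iota>) N1 = 0"
    "\<And>t. t \<ge> 0 \<Longrightarrow> measure (\<xi> t) {0..?y} > 0 \<Longrightarrow> t \<in> N1"
    using null_cover[OF Sint1[OF y(1)] sets_stieltjes xi_meas_fun[OF y(1)]] by blast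
  obtain N2 where N2: "N2 \<in> sets borel" "emeasure (stieltjes (\<lambda>s. measure (\<beta> s) {\<tau><..})) N2 = 0"
    "\<And>t. t \<ge> 0 \<Longrightarrow> measure (\<xi> t) {0..\<tau>} > 0 \<Longrightarrow> t \<in> N2"
    using null_cover[OF Sint2[OF tau0] sets_stieltjes xi_meas_fun[OF tau0]] by blast
  define N where "N = N1 \<inter> N2 \<inter> {..\<tau>}"
  have Nb: "N \<in> sets borel" using N1(1) N2(1) unfolding N_def by simp
  have bad: "t \<in> N" if t: "t \<ge> 0" "measure (xic t) {0..x} > 0" for t
  proof -
    have "t < \<tau>" using xic_late[of t x] t(2) by (cases "t < \<tau>") auto
    then have m: "min t \<tau> = t" by simp
    have p: "measure (\<xi> t) {0..?y} > 0" using xic_meas[OF t(1), of x] t(2) m by simp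
    have "measure (\<xi> t) {0..?y} \<le> measure (\<xi> t) {0..\<tau>}"
      by (rule fin_meas_mono[OF fin_xi[OF t(1)]]) (use y in auto)
    then have "measure (\<xi> t) {0..\<tau>} > 0" using p by simp
    then show ?thesis unfolding N_def using N1(3)[OF t(1) p] N2(3)[OF t(1)] \<open>t < \<tau>\<close> by simp
  qed
  let ?B = "\<lambda>s. measure (\<beta>s (min s \<tau>)) {\<tau><..}"
  let ?P = "\<lambda>s. measure (\<beta> s) {\<tau><..}"
  have Bm: "\<And>x y. x \<le> y \<Longrightarrow> ext0 ?B x \<le> ext0 ?B y" by (rule up_open_mono[OF cad_bsmin])
  have Br: "\<And>a. continuous (at_right a) (ext0 ?B)" by (rule up_open_rc[OF cad_bsmin])
  have Pm: "\<And>x y. x \<le> y \<Longrightarrow> ext0 ?P x \<le> ext0 ?P y" by (rule up_open_mono[OF Sc(2)])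
  have Pr: "\<And>a. continuous (at_right a) (ext0 ?P)" by (rule up_open_rc[OF Sc(2)])
  have Gm: "\<And>x y. x \<le> y \<Longrightarrow> ext0 \<iota> x + ext0 ?B x \<le> ext0 \<iota> y + ext0 ?B y"
    using ext0_iota_mono Bm by (simp add: add_mono)
  have Gr: "\<And>a. continuous (at_right a) (\<lambda>x. ext0 \<iota> x + ext0 ?B x)"
    using ext0_iota_rc Br by (intro continuous_add)
  have NsubT: "N \<subseteq> {..\<tau>}" unfolding N_def by auto
  have "emeasure (stieltjes iotac) N = emeasure (interval_measure (\<lambda>x. ext0 \<iota> x + ext0 ?B x)) N"
    unfolding stieltjes_ext0
  proof (rule interval_measure_agree[OF ext0_iotac_mono ext0_iotac_rc Gm Gr _ Nb NsubT])
    fix s :: real assume s: "s \<le> \<tau>"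
    show "ext0 iotac s = ext0 \<iota> s + ext0 ?B s"
      using iotac_early[of s] s by (cases "s < 0") (simp_all add: ext0_def)
  qed
  also have "\<dots> = emeasure (stieltjes \<iota>) N + emeasure (interval_measure (ext0 ?B)) N"
    unfolding stieltjes_ext0 by (rule interval_measure_add[OF ext0_iota_mono ext0_iota_rc Bm Br Nb])
  also have "emeasure (interval_measure (ext0 ?B)) N = emeasure (stieltjes ?P) N"
    unfolding stieltjes_ext0
  proof (rule interval_measure_agree[OF Bm Br Pm Pr _ Nb NsubT])
    fix s :: real assume s: "s \<le> \<tau>"
    show "ext0 ?B s = ext0 ?P s"
    proof (cases "s < 0")
      case True then show ?thesis by (simp add: ext0_def)
    next
      case False
      then have s0: "0 \<le> s" by simp
      have "measure (\<beta> s) {\<tau><..} = measure (\<beta>s s) {\<tau><..} + measure (\<beta>r s) {\<tau><..}"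
        using b_split[OF s0] by simp
      then show ?thesis using br_above_tau[OF s0 s] s False by (simp add: ext0_def)
    qed
  qed
  also have "emeasure (stieltjes \<iota>) N = 0"
  proof -
    have "emeasure (stieltjes \<iota>) N \<le> emeasure (stieltjes \<iota>) N1"
      by (rule emeasure_mono) (use N1(1) in \<open>auto simp: N_def stieltjes_def\<close>)
    then show ?thesis using N1(2) by simp
  qed
  also have "emeasure (stieltjes ?P) N = 0"
  proof -
    have "emeasure (stieltjes ?P) N \<le> emeasure (stieltjes ?P) N2"
      by (rule emeasure_mono) (use N2(1) in \<open>auto simp: N_def stieltjes_def\<close>)
    then show ?thesis using N2(2) by simp
  qed
  finally have Nnull: "emeasure (stieltjes iotac) N = 0" by simp
  have "AE t in stieltjes iotac. ennreal (measure (xic t) {0..x}) * indicator {0..} t = 0"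
  proof (rule AE_I'[of N])
    show "N \<in> null_sets (stieltjes iotac)" by (rule null_setsI[OF Nnull]) (simp add: sets_stieltjes Nb)
    show "{t \<in> space (stieltjes iotac). \<not> ennreal (measure (xic t) {0..x}) * indicator {0..} t = 0} \<subseteq> N"
    proof
      fix t assume "t \<in> {t \<in> space (stieltjes iotac). \<not> ennreal (measure (xic t) {0..x}) * indicator {0..} t = 0}"
      then have t0: "t \<ge> 0" "measure (xic t) {0..x} \<noteq> 0"
        by (auto simp: indicator_def split: if_splits)
      then have t: "t \<ge> 0" "measure (xic t) {0..x} > 0"
        using measure_nonneg[of "xic t" "{0..x}"] by linarith+
      show "t \<in> N" by (rule bad[OF t])
    qed
  qed
  then have "(\<integral>\<^sup>+ t. ennreal (measure (xic t) {0..x}) * indicator {0..} t \<partial>stieltjes iotac) = (\<integral>\<^sup>+ t. 0 \<partial>stieltjes iotac)"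
    by (rule nn_integral_cong_AE)
  then show ?thesis by simp
qed

end

context edfs begin

lemma AE_to_zero:
  assumes N: "N \<in> sets borel" "emeasure (stieltjes F) N = 0"
    and bad: "\<And>t. t \<ge> 0 \<Longrightarrow> measure (xic t) {0..x} > 0 \<Longrightarrow> t \<in> N"
  shows "(\<integral>\<^sup>+ t\<in>{0..}. ennreal (measure (xic t) {0..x}) \<partial>stieltjes F) = 0"
proof -
  have "AE t in stieltjes F. ennreal (measure (xic t) {0..x}) * indicator {0..} t = 0"
  proof (rule AE_I'[of N])
    show "N \<in> null_sets (stieltjes F)" by (rule null_setsI[OF N(2)]) (simp add: sets_stieltjes N(1))
    show "{t \<in> space (stieltjes F). \<not> ennreal (measure (xic t) {0..x}) * indicator {0..} t = 0} \<subseteq> N"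
    proof
      fix t assume "t \<in> {t \<in> space (stieltjes F). \<not> ennreal (measure (xic t) {0..x}) * indicator {0..} t = 0}"
      then have t0: "t \<ge> 0" "measure (xic t) {0..x} \<noteq> 0"
        by (auto simp: indicator_def split: if_splits)
      then have t: "t \<ge> 0" "measure (xic t) {0..x} > 0"
        using measure_nonneg[of "xic t" "{0..x}"] by linarith+
      show "t \<in> N" by (rule bad[OF t])
    qed
  qed
  then have "(\<integral>\<^sup>+ t. ennreal (measure (xic t) {0..x}) * indicator {0..} t \<partial>stieltjes F) = (\<integral>\<^sup>+ t. 0 \<partial>stieltjes F)"
    by (rule nn_integral_cong_AE)
  then show ?thesis by simp
qed

lemma C12:
  assumes x: "x \<ge> 0"
  shows "(\<integral>\<^sup>+ t\<in>{0..}. ennreal (measure (xic t) {0..x}) \<partial>stieltjes (\<lambda>s. measure (bc s) {x<..})) = 0"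
proof (cases "x < \<tau>")
  case False
  have z: "ext0 (\<lambda>s. measure (bc s) {x<..}) = (\<lambda>_. 0)"
  proof (rule ext)
    fix s :: real
    show "ext0 (\<lambda>s. measure (bc s) {x<..}) s = 0"
    proof (cases "s < 0")
      case True then show ?thesis by (simp add: ext0_def)
    next
      case False
      then have s0: "s \<ge> 0" by simp
      have "measure (bc s) {x<..} = measure (\<beta> (min s \<tau>)) ({..\<tau>} \<inter> {x<..})"
        unfolding bc_def by (rule rcut_measure) (use fin_b[of "min s \<tau>"] s0 tau in auto)
      also have "{..\<tau>} \<inter> {x<..} = {}" using \<open>\<not> x < \<tau>\<close> by auto
      finally show ?thesis using False by (simp add: ext0_def)
    qed
  qed
  have "emeasure (stieltjes (\<lambda>s. measure (bc s) {x<..})) UNIV = 0"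
    unfolding stieltjes_ext0 z by (rule interval_measure_const) simp
  then show ?thesis by (intro AE_to_zero[of UNIV]) auto
next
  case True
  obtain N3 where N3: "N3 \<in> sets borel" "emeasure (stieltjes (\<lambda>s. measure (\<beta> s) {x<..})) N3 = 0"
    "\<And>t. t \<ge> 0 \<Longrightarrow> measure (\<xi> t) {0..x} > 0 \<Longrightarrow> t \<in> N3"
    using null_cover[OF Sint2[OF x] sets_stieltjes xi_meas_fun[OF x]] by blast
  define N where "N = N3 \<inter> {..\<tau>}"
  have Nb: "N \<in> sets borel" using N3(1) unfolding N_def by simp
  have NsubT: "N \<subseteq> {..\<tau>}" unfolding N_def by auto
  have bad: "t \<in> N" if t: "t \<ge> 0" "measure (xic t) {0..x} > 0" for t
  proof -
    have "t < \<tau>" using xic_late[of t x] t(2) by (cases "t < \<tau>") auto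
    then have m: "min t \<tau> = t" by simp
    have p: "measure (\<xi> t) {0..x} > 0" using xic_meas[OF t(1), of x] t(2) m True by simp
    then show ?thesis unfolding N_def using N3(3)[OF t(1) p] \<open>t < \<tau>\<close> by simp
  qed
  let ?K = "\<lambda>s. measure (bc s) {x<..}"
  let ?B = "\<lambda>s. measure (\<beta> (min s \<tau>)) {\<tau><..}"
  let ?P = "\<lambda>s. measure (\<beta> s) {x<..}"
  have Km: "\<And>x y. x \<le> y \<Longrightarrow> ext0 ?K x \<le> ext0 ?K y" by (rule up_open_mono[OF cad_bc])
  have Kr: "\<And>a. continuous (at_right a) (ext0 ?K)" by (rule up_open_rc[OF cad_bc])
  have Bm: "\<And>x y. x \<le> y \<Longrightarrow> ext0 ?B x \<le> ext0 ?B y" by (rule up_open_mono[OF cad_bmin])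
  have Br: "\<And>a. continuous (at_right a) (ext0 ?B)" by (rule up_open_rc[OF cad_bmin])
  have Pm: "\<And>x y. x \<le> y \<Longrightarrow> ext0 ?P x \<le> ext0 ?P y" by (rule up_open_mono[OF Sc(2)])
  have Pr: "\<And>a. continuous (at_right a) (ext0 ?P)" by (rule up_open_rc[OF Sc(2)])
  have Gm: "\<And>x y. x \<le> y \<Longrightarrow> ext0 ?K x + ext0 ?B x \<le> ext0 ?K y + ext0 ?B y"
    using Km Bm by (simp add: add_mono)
  have Gr: "\<And>a. continuous (at_right a) (\<lambda>x. ext0 ?K x + ext0 ?B x)"
    using Kr Br by (intro continuous_add)
  have "emeasure (stieltjes ?K) N \<le> emeasure (stieltjes ?K) N + emeasure (interval_measure (ext0 ?B)) N"
    by simp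
  also have "\<dots> = emeasure (interval_measure (\<lambda>x. ext0 ?K x + ext0 ?B x)) N"
    unfolding stieltjes_ext0 by (rule interval_measure_add[OF Km Kr Bm Br Nb, symmetric])
  also have "\<dots> = emeasure (stieltjes ?P) N"
    unfolding stieltjes_ext0
  proof (rule interval_measure_agree[OF Gm Gr Pm Pr _ Nb NsubT])
    fix s :: real assume s: "s \<le> \<tau>"
    show "ext0 ?K s + ext0 ?B s = ext0 ?P s"
    proof (cases "s < 0")
      case True then show ?thesis by (simp add: ext0_def)
    next
      case False
      then have s0: "s \<ge> 0" by simp
      have m: "min s \<tau> = s" using s by simp
      have k: "?K s = measure (\<beta> s) ({..\<tau>} \<inter> {x<..})"
        unfolding bc_def m by (rule rcut_measure[OF fin_b[OF s0]]) simp
      have u: "{x<..} = ({..\<tau>} \<inter> {x<..}) \<union> {\<tau><..}" using True by auto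
      have "measure (\<beta> s) {x<..} = measure (\<beta> s) ({..\<tau>} \<inter> {x<..}) + measure (\<beta> s) {\<tau><..}"
        by (subst u, rule fin_meas_union[OF fin_b[OF s0]]) auto
      then show ?thesis using k m False by (simp add: ext0_def)
    qed
  qed
  also have "\<dots> \<le> emeasure (stieltjes ?P) N3"
    by (rule emeasure_mono) (use N3(1) in \<open>auto simp: N_def sets_stieltjes\<close>)
  finally have "emeasure (stieltjes ?K) N = 0" using N3(2) by simp
  then show ?thesis by (rule AE_to_zero[OF Nb _ bad])
qed

end

context edfs begin

lemma rhoc_null_late: "emeasure (stieltjes rhoc) {\<tau>..} = 0"
proof -
  have rm: "\<And>x y. x \<le> y \<Longrightarrow> ext0 rhoc x \<le> ext0 rhoc y" by (rule nnc_mono[OF nnc_rhoc])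
  have rr: "\<And>a. continuous (at_right a) (ext0 rhoc)" by (rule nnc_rc[OF nnc_rhoc])
  have pm: "\<And>x y. x \<le> y \<Longrightarrow> ext0 \<rho> x \<le> ext0 \<rho> y" by (rule nnc_mono[OF Sc(5)])
  have pr: "\<And>a. continuous (at_right a) (ext0 \<rho>)" by (rule nnc_rc[OF Sc(5)])
  have a1: "emeasure (stieltjes rhoc) {\<tau>} = emeasure (stieltjes \<rho>) {\<tau>}"
    unfolding stieltjes_ext0
    by (rule interval_measure_agree[OF rm rr pm pr, of \<tau>]) (auto simp: ext0_def rhoc_def)
  have n1: "{\<tau>} \<in> null_sets (stieltjes rhoc)"
    by (rule null_setsI) (use a1 rho_atom in \<open>auto simp: sets_stieltjes\<close>)
  have n2: "(\<Union>n::nat. {\<tau><..\<tau> + real n}) \<in> null_sets (stieltjes rhoc)"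
  proof (rule null_sets_UN)
    fix n :: nat
    have "emeasure (stieltjes rhoc) {\<tau><..\<tau> + real n} = ennreal (ext0 rhoc (\<tau> + real n) - ext0 rhoc \<tau>)"
      unfolding stieltjes_ext0 by (rule emeasure_interval_measure_Ioc[OF _ rm rr]) simp
    also have "ext0 rhoc (\<tau> + real n) - ext0 rhoc \<tau> = 0" using tau by (simp add: ext0_def rhoc_def)
    finally show "{\<tau><..\<tau> + real n} \<in> null_sets (stieltjes rhoc)"
      by (intro null_setsI) (simp_all add: sets_stieltjes)
  qed
  have u: "{\<tau>..} = {\<tau>} \<union> (\<Union>n::nat. {\<tau><..\<tau> + real n})"
  proof (intro equalityI subsetI)
    fix z assume z: "z \<in> {\<tau>..}"
    show "z \<in> {\<tau>} \<union> (\<Union>n::nat. {\<tau><..\<tau> + real n})"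
    proof (cases "z = \<tau>")
      case True then show ?thesis by simp
    next
      case False
      obtain n :: nat where "z - \<tau> \<le> real n" using real_arch_simple by blast
      then have "z \<in> {\<tau><..\<tau> + real n}" using z False by auto
      then show ?thesis by blast
    qed
  qed auto
  have "{\<tau>..} \<in> null_sets (stieltjes rhoc)" unfolding u using n1 n2 by (rule null_sets.Un)
  then show ?thesis by (rule null_setsD1)
qed

lemma C15: "(\<integral>\<^sup>+ t\<in>{0..}. (if inf_supp (xic t) > ereal t then 1 else 0) \<partial>stieltjes rhoc) = 0"
proof -
  let ?f = "\<lambda>t. (if inf_supp (xic t) > ereal t then 1 else 0) * indicator {0..} t :: ennreal"
  let ?g = "\<lambda>t. (if inf_supp (\<xi> t) > ereal t then 1 else 0) * indicator {0..} t :: ennreal"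
  let ?R = "{..<\<tau>}"
  have rm: "\<And>x y. x \<le> y \<Longrightarrow> ext0 rhoc x \<le> ext0 rhoc y" by (rule nnc_mono[OF nnc_rhoc])
  have rr: "\<And>a. continuous (at_right a) (ext0 rhoc)" by (rule nnc_rc[OF nnc_rhoc])
  have pm: "\<And>x y. x \<le> y \<Longrightarrow> ext0 \<rho> x \<le> ext0 \<rho> y" by (rule nnc_mono[OF Sc(5)])
  have pr: "\<And>a. continuous (at_right a) (ext0 \<rho>)" by (rule nnc_rc[OF Sc(5)])
  have Rm: "?R \<inter> space (stieltjes rhoc) \<in> sets (stieltjes rhoc)" by (simp add: sets_stieltjes)
  have Rm2: "?R \<inter> space (stieltjes \<rho>) \<in> sets (stieltjes \<rho>)" by (simp add: sets_stieltjes)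
  have AE: "AE t in stieltjes rhoc. t \<in> ?R"
  proof (rule AE_I'[of "{\<tau>..}"])
    show "{\<tau>..} \<in> null_sets (stieltjes rhoc)" using rhoc_null_late by (intro null_setsI) (simp_all add: sets_stieltjes)
  qed auto
  have "(\<integral>\<^sup>+ t. ?f t \<partial>stieltjes rhoc) = (\<integral>\<^sup>+ t. ?f t * indicator ?R t \<partial>stieltjes rhoc)"
    by (rule nn_integral_cong_AE) (use AE in \<open>auto elim!: eventually_mono\<close>)
  also have "\<dots> = (\<integral>\<^sup>+ t. ?f t \<partial>restrict_space (stieltjes rhoc) ?R)"
    by (rule nn_integral_restrict_space[OF Rm, symmetric])
  also have "restrict_space (stieltjes rhoc) ?R = restrict_space (stieltjes \<rho>) ?R"
  proof (rule measure_eqI)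
    show "sets (restrict_space (stieltjes rhoc) ?R) = sets (restrict_space (stieltjes \<rho>) ?R)"
      by (simp add: sets_restrict_space sets_stieltjes)
    fix A assume A: "A \<in> sets (restrict_space (stieltjes rhoc) ?R)"
    then have A': "A \<subseteq> ?R" "A \<in> sets borel"
      using sets_restrict_space_iff[OF Rm] by (auto simp: sets_stieltjes)
    have "emeasure (restrict_space (stieltjes rhoc) ?R) A = emeasure (stieltjes rhoc) A"
      by (rule emeasure_restrict_space[OF Rm A'(1)])
    also have "\<dots> = emeasure (stieltjes \<rho>) A"
      unfolding stieltjes_ext0
      by (rule interval_measure_agree[OF rm rr pm pr, of \<tau>]) (use A' in \<open>auto simp: ext0_def rhoc_def\<close>)
    also have "\<dots> = emeasure (restrict_space (stieltjes \<rho>) ?R) A"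
      by (rule emeasure_restrict_space[OF Rm2 A'(1), symmetric])
    finally show "emeasure (restrict_space (stieltjes rhoc) ?R) A = emeasure (restrict_space (stieltjes \<rho>) ?R) A" .
  qed
  also have "(\<integral>\<^sup>+ t. ?f t \<partial>restrict_space (stieltjes \<rho>) ?R) = (\<integral>\<^sup>+ t. ?f t * indicator ?R t \<partial>stieltjes \<rho>)"
    by (rule nn_integral_restrict_space[OF Rm2])
  also have "\<dots> \<le> (\<integral>\<^sup>+ t. ?g t \<partial>stieltjes \<rho>)"
  proof (rule nn_integral_mono)
    fix t assume "t \<in> space (stieltjes \<rho>)"
    show "?f t * indicator ?R t \<le> ?g t"
    proof (cases "0 \<le> t \<and> t < \<tau> \<and> inf_supp (xic t) > ereal t")
      case True
      then have t: "0 \<le> t" "t < \<tau>" "inf_supp (xic t) > ereal t" by auto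
      have "inf_supp (\<xi> t) > ereal t"
      proof (rule ccontr)
        assume "\<not> inf_supp (\<xi> t) > ereal t"
        then have le: "inf_supp (\<xi> t) \<le> ereal t" by simp
        have "ereal t < ereal \<tau>" using t(2) by simp
        with le have lt: "inf_supp (\<xi> t) < ereal \<tau>" by (rule le_less_trans)
        have "xic t = rcut \<tau> (\<xi> t)" using t(2) by (simp add: xic_def)
        then have "inf_supp (xic t) \<le> inf_supp (\<xi> t)" using inf_supp_rcut[OF fin_xi[OF t(1)] lt] by simp
        then show False using le t(3) by simp
      qed
      then show ?thesis using t by (simp add: indicator_def)
    next
      case False
      then show ?thesis by (auto simp: indicator_def)
    qed
  qed
  also have "\<dots> = 0" using Ssig by simp
  finally show ?thesis by simp
qed

end


context edfs begin

lemma FME_c: "hard_EDF_FME (truncate_data \<alpha> \<tau>) \<mu> xic bc bsc brc rhoc iotac"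
  unfolding hard_EDF_FME_def
proof (intro conjI)
  show "cadlag_M xic" by (rule cad_xic)
  show "cadlag_M_up bc" by (rule cad_bc)
  show "cadlag_M_up bsc" by (rule cad_bsc)
  show "cadlag_M_up brc" by (rule cad_brc)
  show "nonneg_nondec_cadlag rhoc" by (rule nnc_rhoc)
  show "nonneg_nondec_cadlag iotac" by (rule nnc_iotac)
  show "\<forall>t\<ge>0. \<forall>B\<in>sets borel. emeasure (bc t) B = emeasure (bsc t) B + emeasure (brc t) B"
    using C7 by blast
  show "\<forall>t\<ge>0. iotac t = \<mu> t - measure (bsc t) {0..}" by (simp add: iotac_def)
  show "\<forall>t\<ge>0. emeasure (brc t) {t<..} = 0" using C9 by blast
  show "\<forall>t\<ge>0. \<forall>x\<ge>0. measure (xic t) {0..x} = measure (truncate_data \<alpha> \<tau> t) {0..x} - measure (bc t) {0..x}"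
    using C10 by blast
  show "\<forall>x\<ge>0. (\<integral>\<^sup>+ t\<in>{0..}. ennreal (measure (xic t) {0..x}) \<partial>stieltjes iotac) = 0"
    using C11 by blast
  show "\<forall>x\<ge>0. (\<integral>\<^sup>+ t\<in>{0..}. ennreal (measure (xic t) {0..x}) \<partial>stieltjes (\<lambda>s. measure (bc s) {x<..})) = 0"
    using C12 by blast
  show "\<forall>t\<ge>0. rhoc t = measure (brc t) {0..t} \<and> rhoc t = measure (brc t) {0..}"
    using C13 by blast
  show "\<forall>t\<ge>0. emeasure (xic t) {0..<t} = 0" using C14 by blast
  show "(\<integral>\<^sup>+ t\<in>{0..}. (if inf_supp (xic t) > ereal t then 1 else 0) \<partial>stieltjes rhoc) = 0"
    by (rule C15)
qed

end

theorem lemma3p5: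
  fixes \<alpha> :: "real \<Rightarrow> real measure" and \<mu> :: "real \<Rightarrow> real" and \<tau> :: real
    and \<xi> \<beta> \<beta>s \<beta>r \<xi>c \<beta>c \<beta>sc \<beta>rc :: "real \<Rightarrow> real measure"
    and \<rho> \<iota> \<rho>c \<iota>c :: "real \<Rightarrow> real"
  assumes "data_assumption \<alpha> \<mu>"
    and "\<tau> > 0"
    and "unique_hard_EDF_solution (truncate_data \<alpha> \<tau>) \<mu> \<xi>c \<beta>c \<beta>sc \<beta>rc \<rho>c \<iota>c"
    and "unique_hard_EDF_solution \<alpha> \<mu> \<xi> \<beta> \<beta>s \<beta>r \<rho> \<iota>"
  shows "\<forall>x\<in>{0..\<tau>}. \<forall>t\<in>{0..\<tau>}.
           \<rho> t = \<rho>c t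
         \<and> measure (\<beta>r t) {0..x} = measure (\<beta>rc t) {0..x}
         \<and> measure (\<beta>s t) {0..x} = measure (\<beta>sc t) {0..x}
         \<and> measure (\<xi> t) {0..x} = measure (\<xi>c t) {0..x}"
proof -
  have "\<exists>\<xi>0 \<alpha>h ar. atomless_meas \<xi>0 \<and> cont_M_atomless_up \<alpha>h
     \<and> (\<forall>t\<ge>0. sets (\<alpha> t) = sets borel)
     \<and> (\<forall>t\<ge>0. \<forall>B\<in>sets borel. emeasure (\<alpha> t) B = emeasure \<xi>0 B + emeasure (\<alpha>h t) B)
     \<and> (\<forall>t\<ge>0. \<forall>B\<in>sets borel. emeasure (\<alpha>h t) B = (\<integral>\<^sup>+ s\<in>{0..t}. emeasure (ar s) B \<partial>lborel))
     \<and> (\<forall>t\<ge>0. fin_meas (ar t) \<and> emeasure (ar t) {..<t} = 0)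
     \<and> (\<forall>B\<in>sets borel. (\<lambda>s. emeasure (ar s) B) \<in> borel_measurable (restrict_space borel {0..}))
     \<and> (\<forall>t\<ge>0. ((\<lambda>\<delta>. SUP s\<in>{0..t}. emeasure (ar s) {s..s+\<delta>}) \<longlongrightarrow> 0) (at_right 0))"
    using assms(1) unfolding data_assumption_def by (rule conjunct1)
  then obtain \<xi>0 \<alpha>h ar where D0: "atomless_meas \<xi>0 \<and> cont_M_atomless_up \<alpha>h
     \<and> (\<forall>t\<ge>0. sets (\<alpha> t) = sets borel)
     \<and> (\<forall>t\<ge>0. \<forall>B\<in>sets borel. emeasure (\<alpha> t) B = emeasure \<xi>0 B + emeasure (\<alpha>h t) B)
     \<and> (\<forall>t\<ge>0. \<forall>B\<in>sets borel. emeasure (\<alpha>h t) B = (\<integral>\<^sup>+ s\<in>{0..t}. emeasure (ar s) B \<partial>lborel))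
     \<and> (\<forall>t\<ge>0. fin_meas (ar t) \<and> emeasure (ar t) {..<t} = 0)
     \<and> (\<forall>B\<in>sets borel. (\<lambda>s. emeasure (ar s) B) \<in> borel_measurable (restrict_space borel {0..}))
     \<and> (\<forall>t\<ge>0. ((\<lambda>\<delta>. SUP s\<in>{0..t}. emeasure (ar s) {s..s+\<delta>}) \<longlongrightarrow> 0) (at_right 0))"
    by (elim exE)
  from D0 have D: "atomless_meas \<xi>0" "cont_M_atomless_up \<alpha>h"
       "\<forall>t\<ge>0. sets (\<alpha> t) = sets borel"
       "\<forall>t\<ge>0. \<forall>B\<in>sets borel. emeasure (\<alpha> t) B = emeasure \<xi>0 B + emeasure (\<alpha>h t) B"
       "\<forall>t\<ge>0. \<forall>B\<in>sets borel. emeasure (\<alpha>h t) B = (\<integral>\<^sup>+ s\<in>{0..t}. emeasure (ar s) B \<partial>lborel)"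
       "\<forall>t\<ge>0. fin_meas (ar t) \<and> emeasure (ar t) {..<t} = 0"
    by blast+
  have S: "hard_EDF_FME \<alpha> \<mu> \<xi> \<beta> \<beta>s \<beta>r \<rho> \<iota>"
    using assms(4) unfolding unique_hard_EDF_solution_def by (rule conjunct1)
  interpret E: edfs \<alpha> \<mu> \<tau> \<xi> \<beta> \<beta>s \<beta>r \<rho> \<iota> \<xi>0 \<alpha>h ar
    using assms(2) S D by (intro edfs.intro)
  have uq: "\<forall>\<xi>' \<beta>' \<beta>s' \<beta>r' \<rho>' \<iota>'. hard_EDF_FME (truncate_data \<alpha> \<tau>) \<mu> \<xi>' \<beta>' \<beta>s' \<beta>r' \<rho>' \<iota>' \<longrightarrow>
        (\<forall>t\<ge>0. \<xi>' t = \<xi>c t \<and> \<beta>' t = \<beta>c t \<and> \<beta>s' t = \<beta>sc t \<and> \<beta>r' t = \<beta>rc t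
               \<and> \<rho>' t = \<rho>c t \<and> \<iota>' t = \<iota>c t)"
    using assms(3) unfolding unique_hard_EDF_solution_def by (rule conjunct2)
  note U = uq[rule_format, OF E.FME_c]
  show ?thesis
  proof (intro ballI conjI)
    fix x t assume x: "x \<in> {0..\<tau>}" and t: "t \<in> {0..\<tau>}"
    have t0: "t \<ge> 0" and mt: "min t \<tau> = t" and mx: "min x \<tau> = x" using x t by auto
    have u: "E.xic t = \<xi>c t" "E.bsc t = \<beta>sc t" "E.brc t = \<beta>rc t" "E.rhoc t = \<rho>c t"
      using U[OF t0] by simp_all
    show "\<rho> t = \<rho>c t" using u(4) mt by (simp add: E.rhoc_def)
    show "measure (\<beta>r t) {0..x} = measure (\<beta>rc t) {0..x}" using u(3) mt by (simp add: E.brc_def)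
    show "measure (\<beta>s t) {0..x} = measure (\<beta>sc t) {0..x}"
      using E.bsc_meas[OF t0, of x] u(2) mt mx by simp
    show "measure (\<xi> t) {0..x} = measure (\<xi>c t) {0..x}"
      using E.xic_meas[OF t0, of x] u(1) mt mx by simp
  qed
qed


end
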